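(* Let $V=\mathbb{C}^2$ and consider the Segre cone $X_3\subset V^{\otimes3}$ of rank one tensors. (1) Let $\mu=(2,1)$ and let $t\in S^{(2,1)}V\subset V^{\otimes3}$ be general. Then $t$ admits four critical binary tensors of rank one on $X_{(2,1)}$. The remaining two critical binary tensors of rank one for $t$ on $X_3$ are $x\otimes y\otimes z$ and $y\otimes x\otimes z$ for some $x,y,z\in V$. If $t$ is real, the common singular value of these two critical points on $X_3\setminus X_{(2,1)}$ is real. (2) Let $\mu=(3)$ and let $t\in S^3V\subset V^{\otimes3}$ be general. Then $t$ admits three critical binary tensors of rank one on $X_{(3)}$. The remaining three critical binary tensors of rank one for $t$ on $X_3$ are $x\otimes x\otimes y$, $x\otimes y\otimes x$ and $y\otimes x\otimes x$ for some $x,y\in V$. If $t$ is real, the common singular value of these three critical points on $X_3\setminus X_{(3)}$ is real.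
   Context: $V=\mathbb{C}^2$ carries the complex bilinear symmetric form $q(x,y)=x_0y_0+x_1y_1$, $q(x)=q(x,x)$, and $V^{\otimes3}$ the induced form $\widetilde q(v_1\otimes v_2\otimes v_3,w_1\otimes w_2\otimes w_3)=\prod q(v_i,w_i)$; real tensors are those with real coordinates. $S^{(2,1)}V=S^2V\otimes V$ is the subspace of $V^{\otimes3}$ of tensors symmetric in the first two factors, $S^3V$ the fully symmetric tensors; $X_{(2,1)}=\{x^2\otimes y\}$ and $X_{(3)}=\{x^3\}$ are the corresponding cones of partially symmetric / symmetric rank one tensors, contained in $X_3=\{x\otimes y\otimes z\}$. A critical binary tensor of rank one for $t$ on a cone $X$ is a nonzero smooth point $z\in X$ with $\widetilde q(t-z,y)=0$ for all $y\in T_zX$. Non-isotropic critical tensors for $t$ on $X_3$ are of the form $\sigma\,x_1\otimes x_2\otimes x_3$ with $q(x_i)=1$ and $\widetilde q(t,\ldots\otimes v\otimes\ldots)=\sigma q(x_i,v)$ (contracting $t$ with the $x_k$, $k\neq i$, and $v$ in slot $i$) for all $i$ and $v\in V$; $\sigma$ is the corresponding singular value. *)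

theory Defs
  imports "HOL-Analysis.Analysis"
begin

type_synonym vec = "complex^2"
type_synonym tens = "complex^2^2^2"

definition tp :: "vec \<Rightarrow> vec \<Rightarrow> vec \<Rightarrow> tens" where
  "tp x y z = (\<chi> i. \<chi> j. \<chi> k. x$i * y$j * z$k)"

definition q :: "vec \<Rightarrow> vec \<Rightarrow> complex" where
  "q x y = (\<Sum>i\<in>UNIV. x$i * y$i)"

definition qt :: "tens \<Rightarrow> tens \<Rightarrow> complex" where
  "qt s t = (\<Sum>i\<in>UNIV. \<Sum>j\<in>UNIV. \<Sum>k\<in>UNIV. s$i$j$k * t$i$j$k)"

definition S21 :: "tens set" where
  "S21 = {t. \<forall>i j k. t$i$j$k = t$j$i$k}"

definition S3 :: "tens set" where
  "S3 = {t. \<forall>i j k. t$i$j$k = t$j$i$k \<and> t$i$j$k = t$i$k$j}"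

definition X3 :: "tens set" where
  "X3 = {tp x y z | x y z. True}"

definition X21 :: "tens set" where
  "X21 = {tp x x y | x y. True}"

definition Xsym3 :: "tens set" where
  "Xsym3 = {tp x x x | x. True}"

text \<open>Tangent spaces of the cones (at nonzero points, which are exactly the
  smooth points): images of the differentials of the parametrisations.\<close>
definition tan3 :: "tens \<Rightarrow> tens set" where
  "tan3 z = {tp a y w + tp x b w + tp x y c | a b c x y w. z = tp x y w}"

definition tan21 :: "tens \<Rightarrow> tens set" where
  "tan21 z = {tp a x w + tp x a w + tp x x c | a c x w. z = tp x x w}"

definition tansym3 :: "tens \<Rightarrow> tens set" where
  "tansym3 z = {tp a x x + tp x a x + tp x x a | a x. z = tp x x x}"

definition crit :: "tens set \<Rightarrow> (tens \<Rightarrow> tens set) \<Rightarrow> tens \<Rightarrow> tens \<Rightarrow> bool" where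
  "crit X T t z \<longleftrightarrow> z \<in> X \<and> z \<noteq> 0 \<and> (\<forall>u\<in>T z. qt (t - z) u = 0)"

text \<open>singular value of a (non-isotropic) critical rank one tensor\<close>
definition singular_value :: "tens \<Rightarrow> tens \<Rightarrow> complex \<Rightarrow> bool" where
  "singular_value t z \<sigma> \<longleftrightarrow> (\<exists>x1 x2 x3.
      q x1 x1 = 1 \<and> q x2 x2 = 1 \<and> q x3 x3 = 1 \<and>
      z = tp (\<sigma> *s x1) x2 x3 \<and>
      (\<forall>v. qt t (tp v x2 x3) = \<sigma> * q x1 v) \<and>
      (\<forall>v. qt t (tp x1 v x3) = \<sigma> * q x2 v) \<and>
      (\<forall>v. qt t (tp x1 x2 v) = \<sigma> * q x3 v))"

definition real_tensor :: "tens \<Rightarrow> bool" where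
  "real_tensor t \<longleftrightarrow> (\<forall>i j k. Im (t$i$j$k) = 0)"

inductive poly_fun :: "(tens \<Rightarrow> complex) \<Rightarrow> bool" where
  pf_const: "poly_fun (\<lambda>t. c)"
| pf_coord: "poly_fun (\<lambda>t. t$i$j$k)"
| pf_add: "poly_fun p \<Longrightarrow> poly_fun r \<Longrightarrow> poly_fun (\<lambda>t. p t + r t)"
| pf_mult: "poly_fun p \<Longrightarrow> poly_fun r \<Longrightarrow> poly_fun (\<lambda>t. p t * r t)"

text \<open>P holds for a general element of the (irreducible) linear subspace S:
  it holds off the zero locus of a polynomial not vanishing identically on S\<close>
definition general :: "tens set \<Rightarrow> (tens \<Rightarrow> bool) \<Rightarrow> bool" where
  "general S P \<longleftrightarrow> (\<exists>p. poly_fun p \<and> (\<exists>t\<in>S. p t \<noteq> 0) \<and> (\<forall>t\<in>S. p t \<noteq> 0 \<longrightarrow> P t))"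

end

theory Submission
  imports Defs "HOL-Computational_Algebra.Fundamental_Theorem_Algebra"
begin


lemma tp_nth[simp]: "tp x y w $ i $ j $ k = x$i * y$j * w$k"
  by (simp add: tp_def)

lemma q_eq: "q x y = x$1*y$1 + x$2*y$2"
  by (simp add: q_def sum_2)

lemma qt_eq: "qt s t = s$1$1$1*t$1$1$1 + s$1$1$2*t$1$1$2 + s$1$2$1*t$1$2$1 + s$1$2$2*t$1$2$2
  + s$2$1$1*t$2$1$1 + s$2$1$2*t$2$1$2 + s$2$2$1*t$2$2$1 + s$2$2$2*t$2$2$2"
  by (simp add: qt_def sum_2 algebra_simps)

lemma vec2_eq: "(x::vec) = y \<longleftrightarrow> x$1 = y$1 \<and> x$2 = y$2"
  by (simp add: vec_eq_iff forall_2)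

lemma tens_eq: "(s::tens) = t \<longleftrightarrow>
  s$1$1$1 = t$1$1$1 \<and> s$1$1$2 = t$1$1$2 \<and> s$1$2$1 = t$1$2$1 \<and> s$1$2$2 = t$1$2$2 \<and>
  s$2$1$1 = t$2$1$1 \<and> s$2$1$2 = t$2$1$2 \<and> s$2$2$1 = t$2$2$1 \<and> s$2$2$2 = t$2$2$2"
  by (simp add: vec_eq_iff forall_2 conj_ac)

lemma vec2_zero: "(x::vec) = 0 \<longleftrightarrow> x$1 = 0 \<and> x$2 = 0"
  by (simp add: vec_eq_iff forall_2)

lemma tp_zero: "tp x y w = 0 \<longleftrightarrow> x = 0 \<or> y = 0 \<or> w = 0"
proof
  assume h: "tp x y w = 0"
  show "x = 0 \<or> y = 0 \<or> w = 0"
  proof (rule ccontr)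
    assume "\<not> ?thesis"
    then obtain i j k where "x$i \<noteq> 0" "y$j \<noteq> 0" "w$k \<noteq> 0" by (auto simp: vec_eq_iff)
    moreover have "tp x y w $i$j$k = 0" using h by simp
    ultimately show False by simp
  qed
qed (auto simp: tp_def vec_eq_iff)

lemma tp_scale:
  assumes "tp x' y' w' = tp x y w" "tp x y w \<noteq> 0"
  shows "\<exists>l m n. x' = l *s x \<and> y' = m *s y \<and> w' = n *s w"
proof -
  have nz: "x \<noteq> 0" "y \<noteq> 0" "w \<noteq> 0" using assms(2) tp_zero by auto
  then obtain i j k where ijk: "x$i \<noteq> 0" "y$j \<noteq> 0" "w$k \<noteq> 0" by (auto simp: vec_eq_iff)
  have E: "\<And>a b c. x'$a * y'$b * w'$c = x$a * y$b * w$c"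
    using assms(1) by (metis tp_nth)
  have n': "x'$i \<noteq> 0" "y'$j \<noteq> 0" "w'$k \<noteq> 0" using E[of i j k] ijk by auto
  have "x' = ((y$j*w$k)/(y'$j*w'$k)) *s x"
  proof (subst vec_eq_iff, intro allI)
    fix a show "x'$a = (((y$j*w$k)/(y'$j*w'$k)) *s x)$a"
      using E[of a j k] n' by (simp add: field_simps)
  qed
  moreover have "y' = ((x$i*w$k)/(x'$i*w'$k)) *s y"
  proof (subst vec_eq_iff, intro allI)
    fix a show "y'$a = (((x$i*w$k)/(x'$i*w'$k)) *s y)$a"
      using E[of i a k] n' by (simp add: field_simps)
  qed
  moreover have "w' = ((x$i*y$j)/(x'$i*y'$j)) *s w"
  proof (subst vec_eq_iff, intro allI)
    fix a show "w'$a = (((x$i*y$j)/(x'$i*y'$j)) *s w)$a"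
      using E[of i j a] n' by (simp add: field_simps)
  qed
  ultimately show ?thesis by blast
qed

definition cond3 :: "tens \<Rightarrow> vec \<Rightarrow> vec \<Rightarrow> vec \<Rightarrow> bool" where
 "cond3 t x y w \<longleftrightarrow>
  (t$1$1$1*y$1*w$1 + t$1$1$2*y$1*w$2 + t$1$2$1*y$2*w$1 + t$1$2$2*y$2*w$2 = x$1 * q y y * q w w) \<and>
  (t$2$1$1*y$1*w$1 + t$2$1$2*y$1*w$2 + t$2$2$1*y$2*w$1 + t$2$2$2*y$2*w$2 = x$2 * q y y * q w w) \<and>
  (t$1$1$1*x$1*w$1 + t$1$1$2*x$1*w$2 + t$2$1$1*x$2*w$1 + t$2$1$2*x$2*w$2 = y$1 * q x x * q w w) \<and>
  (t$1$2$1*x$1*w$1 + t$1$2$2*x$1*w$2 + t$2$2$1*x$2*w$1 + t$2$2$2*x$2*w$2 = y$2 * q x x * q w w) \<and>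
  (t$1$1$1*x$1*y$1 + t$1$2$1*x$1*y$2 + t$2$1$1*x$2*y$1 + t$2$2$1*x$2*y$2 = w$1 * q x x * q y y) \<and>
  (t$1$1$2*x$1*y$1 + t$1$2$2*x$1*y$2 + t$2$1$2*x$2*y$1 + t$2$2$2*x$2*y$2 = w$2 * q x x * q y y)"

definition mk2 :: "complex \<Rightarrow> complex \<Rightarrow> vec" where
  "mk2 a b = (\<chi> i. if i = 1 then a else b)"

lemma mk2_nth[simp]: "mk2 a b $ 1 = a" "mk2 a b $ 2 = b"
  by (simp_all add: mk2_def)

lemma qt_tan_expand:
  "qt (t - tp x y w) (tp a y w + tp x b w + tp x y c) =
    a$1 * ((t$1$1$1*y$1*w$1 + t$1$1$2*y$1*w$2 + t$1$2$1*y$2*w$1 + t$1$2$2*y$2*w$2) - x$1 * q y y * q w w)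
  + a$2 * ((t$2$1$1*y$1*w$1 + t$2$1$2*y$1*w$2 + t$2$2$1*y$2*w$1 + t$2$2$2*y$2*w$2) - x$2 * q y y * q w w)
  + b$1 * ((t$1$1$1*x$1*w$1 + t$1$1$2*x$1*w$2 + t$2$1$1*x$2*w$1 + t$2$1$2*x$2*w$2) - y$1 * q x x * q w w)
  + b$2 * ((t$1$2$1*x$1*w$1 + t$1$2$2*x$1*w$2 + t$2$2$1*x$2*w$1 + t$2$2$2*x$2*w$2) - y$2 * q x x * q w w)
  + c$1 * ((t$1$1$1*x$1*y$1 + t$1$2$1*x$1*y$2 + t$2$1$1*x$2*y$1 + t$2$2$1*x$2*y$2) - w$1 * q x x * q y y)
  + c$2 * ((t$1$1$2*x$1*y$1 + t$1$2$2*x$1*y$2 + t$2$1$2*x$2*y$1 + t$2$2$2*x$2*y$2) - w$2 * q x x * q y y)"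
  by (simp add: qt_eq q_eq algebra_simps)

lemma crit3_iff: "crit X3 tan3 t (tp x y w) \<longleftrightarrow> tp x y w \<noteq> 0 \<and> cond3 t x y w"
proof
  assume h: "crit X3 tan3 t (tp x y w)"
  hence nz: "tp x y w \<noteq> 0" and H: "\<And>u. u \<in> tan3 (tp x y w) \<Longrightarrow> qt (t - tp x y w) u = 0"
    by (auto simp: crit_def)
  have T: "qt (t - tp x y w) (tp a y w + tp x b w + tp x y c) = 0" for a b c
    by (rule H, unfold tan3_def, blast)
  show "tp x y w \<noteq> 0 \<and> cond3 t x y w"
    using nz T[of "mk2 1 0" 0 0] T[of "mk2 0 1" 0 0] T[of 0 "mk2 1 0" 0] T[of 0 "mk2 0 1" 0]
      T[of 0 0 "mk2 1 0"] T[of 0 0 "mk2 0 1"]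
    unfolding qt_tan_expand cond3_def by simp
next
  assume h: "tp x y w \<noteq> 0 \<and> cond3 t x y w"
  have "qt (t - tp x y w) u = 0" if u: "u \<in> tan3 (tp x y w)" for u
  proof -
    obtain a b c x' y' w' where u': "u = tp a y' w' + tp x' b w' + tp x' y' c"
      and e: "tp x y w = tp x' y' w'" using u by (auto simp: tan3_def)
    obtain l m n where lmn: "x' = l *s x" "y' = m *s y" "w' = n *s w"
      using tp_scale[OF e[symmetric]] h by auto
    have uu: "u = tp ((m*n) *s a) y w + tp x ((l*n) *s b) w + tp x y ((l*m) *s c)"
      unfolding u' lmn by (simp add: tens_eq)
    have "qt (t - tp x y w) (tp ((m*n) *s a) y w + tp x ((l*n) *s b) w + tp x y ((l*m) *s c)) = 0"
      using h unfolding qt_tan_expand cond3_def by simp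
    thus ?thesis using uu by simp
  qed
  thus "crit X3 tan3 t (tp x y w)" using h by (auto simp: crit_def X3_def)
qed



lemma S21D: "t \<in> S21 \<Longrightarrow> t$2$1$k = t$1$2$k"
  by (simp add: S21_def)

definition trA :: "tens \<Rightarrow> complex" where "trA t = t$1$1$1 + t$2$2$1"
definition trB :: "tens \<Rightarrow> complex" where "trB t = t$1$1$2 + t$2$2$2"
definition m11 :: "tens \<Rightarrow> complex" where "m11 t = trB t * t$1$1$1 - trA t * t$1$1$2"
definition m12 :: "tens \<Rightarrow> complex" where "m12 t = trB t * t$1$2$1 - trA t * t$1$2$2"
definition m22 :: "tens \<Rightarrow> complex" where "m22 t = trB t * t$2$2$1 - trA t * t$2$2$2"
definition Dst :: "tens \<Rightarrow> complex" where "Dst t = m11 t * m22 t - (m12 t)^2"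
definition rho2 :: "tens \<Rightarrow> complex" where "rho2 t = (trA t)^2 + (trB t)^2"
definition g1 :: "tens \<Rightarrow> complex" where "g1 t = t$1$1$1 * t$2$2$2 - t$1$1$2 * t$2$2$1"
definition Tw :: "tens \<Rightarrow> vec \<Rightarrow> complex" where "Tw t w = w$1 * trA t + w$2 * trB t"

lemma cond3_S21:
  assumes "t \<in> S21"
  shows "cond3 t x y w \<longleftrightarrow>
  ((w$1*t$1$1$1 + w$2*t$1$1$2)*y$1 + (w$1*t$1$2$1 + w$2*t$1$2$2)*y$2 = x$1 * q y y * q w w) \<and>
  ((w$1*t$1$2$1 + w$2*t$1$2$2)*y$1 + (w$1*t$2$2$1 + w$2*t$2$2$2)*y$2 = x$2 * q y y * q w w) \<and>
  ((w$1*t$1$1$1 + w$2*t$1$1$2)*x$1 + (w$1*t$1$2$1 + w$2*t$1$2$2)*x$2 = y$1 * q x x * q w w) \<and>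
  ((w$1*t$1$2$1 + w$2*t$1$2$2)*x$1 + (w$1*t$2$2$1 + w$2*t$2$2$2)*x$2 = y$2 * q x x * q w w) \<and>
  (t$1$1$1*x$1*y$1 + t$1$2$1*(x$1*y$2 + x$2*y$1) + t$2$2$1*x$2*y$2 = w$1 * q x x * q y y) \<and>
  (t$1$1$2*x$1*y$1 + t$1$2$2*(x$1*y$2 + x$2*y$1) + t$2$2$2*x$2*y$2 = w$2 * q x x * q y y)"
  unfolding cond3_def using S21D[OF assms] by (simp add: algebra_simps)

lemma indep_gamma:
  assumes "t \<in> S21" "cond3 t x y w" "x$1*y$2 - x$2*y$1 \<noteq> 0" "g1 t \<noteq> 0" "w \<noteq> 0"
  shows "q w w \<noteq> 0"
proof
  assume g: "q w w = 0"
  have E: "((w$1*t$1$1$1 + w$2*t$1$1$2)*y$1 + (w$1*t$1$2$1 + w$2*t$1$2$2)*y$2 = 0)"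
   "((w$1*t$1$2$1 + w$2*t$1$2$2)*y$1 + (w$1*t$2$2$1 + w$2*t$2$2$2)*y$2 = 0)"
   "((w$1*t$1$1$1 + w$2*t$1$1$2)*x$1 + (w$1*t$1$2$1 + w$2*t$1$2$2)*x$2 = 0)"
   "((w$1*t$1$2$1 + w$2*t$1$2$2)*x$1 + (w$1*t$2$2$1 + w$2*t$2$2$2)*x$2 = 0)"
    using assms(2) g unfolding cond3_S21[OF assms(1)] by auto
  have "(x$1*y$2 - x$2*y$1) * g1 t * w$1 = 0" "(x$1*y$2 - x$2*y$1) * g1 t * w$2 = 0"
    using E unfolding g1_def by algebra+
  thus False using assms(3-5) by (simp add: vec2_zero)
qed



lemma indep_alpha:
  assumes "t \<in> S21" "cond3 t x y w" "x$1*y$2 - x$2*y$1 \<noteq> 0" "g1 t \<noteq> 0" "w \<noteq> 0"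
    "Dst t \<noteq> 0"
  shows "q x x \<noteq> 0"
proof
  assume a: "q x x = 0"
  have gnz: "q w w \<noteq> 0" using indep_gamma assms by blast
  have E: "((w$1*t$1$1$1 + w$2*t$1$1$2)*y$1 + (w$1*t$1$2$1 + w$2*t$1$2$2)*y$2 = x$1 * q y y * q w w)"
   "((w$1*t$1$2$1 + w$2*t$1$2$2)*y$1 + (w$1*t$2$2$1 + w$2*t$2$2$2)*y$2 = x$2 * q y y * q w w)"
   "((w$1*t$1$1$1 + w$2*t$1$1$2)*x$1 + (w$1*t$1$2$1 + w$2*t$1$2$2)*x$2 = 0)"
   "((w$1*t$1$2$1 + w$2*t$1$2$2)*x$1 + (w$1*t$2$2$1 + w$2*t$2$2$2)*x$2 = 0)"
    using assms(2) a unfolding cond3_S21[OF assms(1)] by auto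
  have bnz: "q y y \<noteq> 0"
  proof
    assume b: "q y y = 0"
    have "(x$1*y$2 - x$2*y$1) * g1 t * w$1 = 0" "(x$1*y$2 - x$2*y$1) * g1 t * w$2 = 0"
      using E b unfolding g1_def by algebra+
    thus False using assms(3-5) by (simp add: vec2_zero)
  qed
  have T: "(x$1*y$2 - x$2*y$1) * q y y * q w w * Tw t w = 0"
    using E unfolding Tw_def trA_def trB_def by algebra
  have D1: "((w$1*t$1$1$1 + w$2*t$1$1$2)*(w$1*t$2$2$1 + w$2*t$2$2$2) - (w$1*t$1$2$1 + w$2*t$1$2$2)^2) * x$1 = 0"
     "((w$1*t$1$1$1 + w$2*t$1$1$2)*(w$1*t$2$2$1 + w$2*t$2$2$2) - (w$1*t$1$2$1 + w$2*t$1$2$2)^2) * x$2 = 0"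
    using E by algebra+
  have xnz: "x \<noteq> 0" using assms(3) by (auto simp: vec2_zero)
  have D: "(w$1*t$1$1$1 + w$2*t$1$1$2)*(w$1*t$2$2$1 + w$2*t$2$2$2) - (w$1*t$1$2$1 + w$2*t$1$2$2)^2 = 0"
    using D1 xnz by (auto simp: vec2_zero)
  have T0: "Tw t w = 0" using T assms(3) bnz gnz by simp
  have "Dst t * (w$1)^2 = 0" "Dst t * (w$2)^2 = 0"
    using D T0 unfolding Dst_def m11_def m12_def m22_def Tw_def trA_def trB_def by algebra+
  thus False using assms(5,6) by (simp add: vec2_zero)
qed



lemma cond3_swap: "t \<in> S21 \<Longrightarrow> cond3 t x y w \<Longrightarrow> cond3 t y x w"
  unfolding cond3_S21 by (auto simp: algebra_simps)

definition wst :: "tens \<Rightarrow> vec" where "wst t = mk2 (trB t) (- trA t)"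
definition Mst :: "tens \<Rightarrow> vec \<Rightarrow> vec" where "Mst t v = mk2 (m11 t * v$1 + m12 t * v$2) (m12 t * v$1 + m22 t * v$2)"
definition n11 :: "tens \<Rightarrow> complex" where "n11 t = trA t * t$1$1$1 + trB t * t$1$1$2"
definition n12 :: "tens \<Rightarrow> complex" where "n12 t = trA t * t$1$2$1 + trB t * t$1$2$2"
definition n22 :: "tens \<Rightarrow> complex" where "n22 t = trA t * t$2$2$1 + trB t * t$2$2$2"
definition hA :: "tens \<Rightarrow> complex" where "hA t = n11 t * m11 t + n12 t * m12 t"
definition hB :: "tens \<Rightarrow> complex" where "hB t = n11 t * m12 t + n12 t * m22 t + n12 t * m11 t + n22 t * m12 t"
definition hC :: "tens \<Rightarrow> complex" where "hC t = n12 t * m12 t + n22 t * m22 t"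
definition hq :: "tens \<Rightarrow> vec \<Rightarrow> complex" where "hq t v = hA t * (v$1)^2 + hB t * v$1 * v$2 + hC t * (v$2)^2"

lemma trace_Mst: "m22 t = - m11 t"
  unfolding m11_def m22_def trA_def trB_def by algebra

lemma Dst_alt: "- Dst t = (m11 t)^2 + (m12 t)^2"
  unfolding Dst_def trace_Mst[of t] by (simp add: power2_eq_square)

lemma q_Mst: "q (Mst t v) (Mst t v) = - Dst t * q v v"
  unfolding Dst_alt q_eq Mst_def using trace_Mst[of t] by (simp add: algebra_simps power2_eq_square)

lemma indep_main:
  assumes S: "t \<in> S21" and c3: "cond3 t x y w" and d: "x$1*y$2 - x$2*y$1 \<noteq> 0"
    and G: "g1 t \<noteq> 0" "Dst t \<noteq> 0" "rho2 t \<noteq> 0" and wnz: "w \<noteq> 0"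
  shows "q x x \<noteq> 0 \<and> q y y \<noteq> 0 \<and> q w w \<noteq> 0 \<and>
    (\<exists>k c. k \<noteq> 0 \<and> c \<noteq> 0 \<and> w = k *s wst t \<and> y = c *s Mst t x) \<and> hq t x = 0 \<and>
    q x x * q y y * q w w * rho2 t = - Dst t"
proof -
  have ga: "q w w \<noteq> 0" using indep_gamma S c3 d G wnz by blast
  have al: "q x x \<noteq> 0" using indep_alpha S c3 d G wnz by blast
  have be: "q y y \<noteq> 0" using indep_alpha[OF S cond3_swap[OF S c3] _ G(1) wnz G(2)] d
    by (simp add: algebra_simps)
  note E = c3[unfolded cond3_S21[OF S]]
  have "(x$1*y$2 - x$2*y$1) * q x x * q w w * Tw t w = 0"
    using E unfolding Tw_def trA_def trB_def by algebra
  hence T0: "Tw t w = 0" using d al ga by simp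
  define k where "k = (w$1 * trB t - w$2 * trA t) / rho2 t"
  have wk: "w = k *s wst t"
    using T0 G(3) unfolding vec2_eq k_def wst_def Tw_def rho2_def
    by (auto simp: field_simps power2_eq_square) algebra+
  have knz: "k \<noteq> 0" using wk wnz by auto
  define c where "c = k / (q x x * q w w)"
  have cnz: "c \<noteq> 0" using knz al ga by (simp add: c_def)
  have w1: "w$1 = k * trB t" and w2: "w$2 = - k * trA t" using wk by (simp_all add: wst_def)
  have yc: "y = c *s Mst t x"
  proof -
    have "y$1 * (q x x * q w w) = k * (m11 t * x$1 + m12 t * x$2)"
      "y$2 * (q x x * q w w) = k * (m12 t * x$1 + m22 t * x$2)"
      using E unfolding w1 w2 m11_def m12_def m22_def by (simp_all add: algebra_simps)
    thus ?thesis using al ga unfolding vec2_eq c_def Mst_def by (simp add: field_simps)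
  qed
  have "c * hq t x = 0"
  proof -
    have "trA t * (t$1$1$1*x$1*y$1 + t$1$2$1*(x$1*y$2 + x$2*y$1) + t$2$2$1*x$2*y$2)
        + trB t * (t$1$1$2*x$1*y$1 + t$1$2$2*(x$1*y$2 + x$2*y$1) + t$2$2$2*x$2*y$2) = 0"
      using E T0 unfolding Tw_def by algebra
    thus ?thesis unfolding yc hq_def hA_def hB_def hC_def n11_def n12_def n22_def Mst_def
      by (simp add: algebra_simps power2_eq_square)
  qed
  hence h0: "hq t x = 0" using cnz by simp
  have qw: "q w w = k^2 * rho2 t" unfolding wk q_eq wst_def rho2_def by (simp add: algebra_simps power2_eq_square)
  have qy: "q y y = c^2 * (- Dst t) * q x x"
  proof -
    have "q y y = c^2 * q (Mst t x) (Mst t x)" unfolding yc q_eq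
      by (simp add: algebra_simps power2_eq_square)
    thus ?thesis using q_Mst[of t x] by simp
  qed
  have "q x x * q y y * q w w * rho2 t = - Dst t"
  proof -
    have ck: "c * (k * rho2 t * q x x) = 1" using c_def qw al knz G(3) by (simp add: field_simps power2_eq_square)
    have "q x x * q y y * q w w * rho2 t = - Dst t * (c * (k * rho2 t * q x x))^2"
      unfolding qy qw by (simp add: algebra_simps power2_eq_square)
    thus ?thesis using ck by simp
  qed
  thus ?thesis using al be ga knz cnz wk yc h0 by blast
qed



definition res2 :: "complex \<Rightarrow> complex \<Rightarrow> complex \<Rightarrow> complex \<Rightarrow> complex \<Rightarrow> complex \<Rightarrow> complex" where
  "res2 p0 p1 p2 q0 q1 q2 = (p0*q2 - p2*q0)^2 - (p0*q1 - p1*q0)*(p1*q2 - p2*q1)"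

lemma res2_root:
  fixes p0 p1 p2 q0 q1 q2 r1 r2 :: complex
  assumes "p0*r1^2 + p1*r1*r2 + p2*r2^2 = 0" "q0*r1^2 + q1*r1*r2 + q2*r2^2 = 0"
  shows "res2 p0 p1 p2 q0 q1 q2 * r1^3 = 0" "res2 p0 p1 p2 q0 q1 q2 * r2^3 = 0"
  using assms unfolding res2_def by algebra+

lemma res2_root_vec:
  fixes p0 p1 p2 q0 q1 q2 :: complex and z :: vec
  assumes "p0*(z$1)^2 + p1*z$1*z$2 + p2*(z$2)^2 = 0" "q0*(z$1)^2 + q1*z$1*z$2 + q2*(z$2)^2 = 0" "z \<noteq> 0"
  shows "res2 p0 p1 p2 q0 q1 q2 = 0"
  using res2_root[OF assms(1,2)] assms(3) by (auto simp: vec2_zero)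

lemma three_roots:
  fixes p0 p1 p2 x1 x2 u1 u2 r1 r2 :: complex
  assumes "p0*x1^2 + p1*x1*x2 + p2*x2^2 = 0" "p0*u1^2 + p1*u1*u2 + p2*u2^2 = 0"
    "p0*r1^2 + p1*r1*r2 + p2*r2^2 = 0"
  shows "p0 * (x1*u2 - x2*u1) * (x1*r2 - x2*r1) * (u1*r2-u2*r1)^2 = 0"
    "p1 * (x1*u2 - x2*u1) * (x1*r2 - x2*r1) * (u1*r2-u2*r1)^2 = 0"
    "p2 * (x1*u2 - x2*u1) * (x1*r2 - x2*r1) * (u1*r2-u2*r1)^2 = 0"
  using assms by algebra+



definition G5 :: "tens \<Rightarrow> complex" where "G5 t = res2 (hA t) (hB t) (hC t) 1 0 1"
definition G6 :: "tens \<Rightarrow> complex" where "G6 t = res2 (hA t) (hB t) (hC t) (m12 t) (m22 t - m11 t) (- m12 t)"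

lemma Mst_Mst: "Mst t (Mst t z) = (- Dst t) *s z"
  unfolding vec2_eq Mst_def Dst_alt using trace_Mst[of t] by (simp add: algebra_simps power2_eq_square)

lemma hq_Mst: "hq t (Mst t z) = - Dst t * hq t z"
  unfolding hq_def hA_def hB_def hC_def Mst_def Dst_def using trace_Mst[of t]
  by (simp add: algebra_simps power2_eq_square)

lemma proj_id1: "rho2 t * (t$1$1$1*z$1*Mst t z$1 + t$1$2$1*(z$1*Mst t z$2 + z$2*Mst t z$1) + t$2$2$1*z$2*Mst t z$2)
   = - Dst t * q z z * trB t + hq t z * trA t"
  unfolding rho2_def hq_def hA_def hB_def hC_def n11_def n12_def n22_def Mst_def Dst_def m11_def m12_def m22_def
    trA_def trB_def q_eq by (simp only: mk2_nth) algebra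

lemma proj_id2: "rho2 t * (t$1$1$2*z$1*Mst t z$1 + t$1$2$2*(z$1*Mst t z$2 + z$2*Mst t z$1) + t$2$2$2*z$2*Mst t z$2)
   = - Dst t * q z z * (- trA t) + hq t z * trB t"
  unfolding rho2_def hq_def hA_def hB_def hC_def n11_def n12_def n22_def Mst_def Dst_def m11_def m12_def m22_def
    trA_def trB_def q_eq by (simp only: mk2_nth) algebra



lemma hq_root: "\<exists>z. z \<noteq> 0 \<and> hq t z = 0"
proof (cases "hA t = 0")
  case True
  thus ?thesis by (intro exI[of _ "mk2 1 0"]) (simp add: hq_def vec2_zero)
next
  case False
  define d where "d = csqrt ((hB t)^2 - 4 * hA t * hC t)"
  have d2: "d^2 = (hB t)^2 - 4 * hA t * hC t" unfolding d_def by simp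
  show ?thesis
  proof (intro exI[of _ "mk2 (- hB t + d) (2 * hA t)"] conjI)
    show "mk2 (- hB t + d) (2 * hA t) \<noteq> 0" using False by (simp add: vec2_zero)
    show "hq t (mk2 (- hB t + d) (2 * hA t)) = 0"
      unfolding hq_def using d2 by (simp add: algebra_simps power2_eq_square) algebra
  qed
qed

lemma Mst_smult: "Mst t (c *s z) = c *s Mst t z"
  by (simp add: vec2_eq Mst_def algebra_simps)

lemma q_wst: "q (wst t) (wst t) = rho2 t"
  by (simp add: q_eq wst_def rho2_def power2_eq_square)

lemma Mw_wst1: "(wst t$1*t$1$1$1 + wst t$2*t$1$1$2)*y$1 + (wst t$1*t$1$2$1 + wst t$2*t$1$2$2)*y$2 = Mst t y $ 1"
  by (simp add: wst_def Mst_def m11_def m12_def algebra_simps)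
lemma Mw_wst2: "(wst t$1*t$1$2$1 + wst t$2*t$1$2$2)*y$1 + (wst t$1*t$2$2$1 + wst t$2*t$2$2$2)*y$2 = Mst t y $ 2"
  by (simp add: wst_def Mst_def m12_def m22_def algebra_simps)

lemma pair_exists:
  assumes S: "t \<in> S21" and G: "G5 t \<noteq> 0" "G6 t \<noteq> 0" "Dst t \<noteq> 0" "rho2 t \<noteq> 0"
  shows "\<exists>x y. x$1*y$2 - x$2*y$1 \<noteq> 0 \<and> cond3 t x y (wst t)"
proof -
  obtain x where xnz: "x \<noteq> 0" and hx: "hq t x = 0" using hq_root by blast
  have al: "q x x \<noteq> 0"
  proof
    assume "q x x = 0"
    hence "1*(x$1)^2 + 0*x$1*x$2 + 1*(x$2)^2 = 0" by (simp add: q_eq power2_eq_square)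
    moreover have "hA t*(x$1)^2 + hB t*x$1*x$2 + hC t*(x$2)^2 = 0" using hx by (simp add: hq_def)
    ultimately have "G5 t = 0" unfolding G5_def using res2_root_vec xnz by blast
    thus False using G by simp
  qed
  have dx: "x$1 * Mst t x$2 - x$2 * Mst t x$1 \<noteq> 0"
  proof
    assume "x$1 * Mst t x$2 - x$2 * Mst t x$1 = 0"
    hence "m12 t*(x$1)^2 + (m22 t - m11 t)*x$1*x$2 + (- m12 t)*(x$2)^2 = 0"
      by (simp add: Mst_def algebra_simps power2_eq_square)
    moreover have "hA t*(x$1)^2 + hB t*x$1*x$2 + hC t*(x$2)^2 = 0" using hx by (simp add: hq_def)
    ultimately have "G6 t = 0" unfolding G6_def using res2_root_vec xnz by blast
    thus False using G by simp
  qed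
  define s where "s = 1 / (q x x * rho2 t)"
  have snz: "s \<noteq> 0" using al G by (simp add: s_def)
  have s1: "s * q x x * rho2 t = 1" using al G by (simp add: s_def)
  define y where "y = s *s Mst t x"
  have My: "Mst t y = (s * - Dst t) *s x" unfolding y_def Mst_smult Mst_Mst
    by (simp add: vec2_eq)
  have qy: "q y y = s^2 * (- Dst t) * q x x"
  proof -
    have "q y y = s^2 * q (Mst t x) (Mst t x)" unfolding y_def q_eq
      by (simp add: algebra_simps power2_eq_square)
    thus ?thesis using q_Mst[of t x] by simp
  qed
  have bg: "q y y * q (wst t) (wst t) = s * - Dst t"
    unfolding qy q_wst using s1 by (simp add: algebra_simps power2_eq_square)
  have ag: "q x x * q (wst t) (wst t) = 1 / s"
    unfolding q_wst using s1 snz by (simp add: field_simps)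
  have ab: "q x x * q y y = q x x * s * (s * - Dst t * q x x)" unfolding qy by (simp add: power2_eq_square algebra_simps)
  have P1: "t$1$1$1*x$1*y$1 + t$1$2$1*(x$1*y$2 + x$2*y$1) + t$2$2$1*x$2*y$2 = wst t $1 * q x x * q y y"
  proof -
    have "rho2 t * (t$1$1$1*x$1*y$1 + t$1$2$1*(x$1*y$2 + x$2*y$1) + t$2$2$1*x$2*y$2)
        = s * (rho2 t * (t$1$1$1*x$1*Mst t x$1 + t$1$2$1*(x$1*Mst t x$2 + x$2*Mst t x$1) + t$2$2$1*x$2*Mst t x$2))"
      unfolding y_def by (simp add: algebra_simps)
    also have "\<dots> = s * (- Dst t * q x x * trB t)"
      using proj_id1[of t x] hx by simp
    also have "\<dots> = (s * q x x * rho2 t) * (s * (- Dst t * q x x * trB t))"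
      using s1 by simp
    also have "\<dots> = rho2 t * (wst t $1 * q x x * q y y)"
      unfolding qy wst_def by (simp add: algebra_simps power2_eq_square)
    finally show ?thesis using G(4) by simp
  qed
  have P2: "t$1$1$2*x$1*y$1 + t$1$2$2*(x$1*y$2 + x$2*y$1) + t$2$2$2*x$2*y$2 = wst t $2 * q x x * q y y"
  proof -
    have "rho2 t * (t$1$1$2*x$1*y$1 + t$1$2$2*(x$1*y$2 + x$2*y$1) + t$2$2$2*x$2*y$2)
        = s * (rho2 t * (t$1$1$2*x$1*Mst t x$1 + t$1$2$2*(x$1*Mst t x$2 + x$2*Mst t x$1) + t$2$2$2*x$2*Mst t x$2))"
      unfolding y_def by (simp add: algebra_simps)
    also have "\<dots> = s * (- Dst t * q x x * (- trA t))"
      using proj_id2[of t x] hx by simp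
    also have "\<dots> = (s * q x x * rho2 t) * (s * (- Dst t * q x x * (- trA t)))"
      using s1 by simp
    also have "\<dots> = rho2 t * (wst t $2 * q x x * q y y)"
      unfolding qy wst_def by (simp add: algebra_simps power2_eq_square)
    finally show ?thesis using G(4) by simp
  qed
  have "cond3 t x y (wst t)"
    unfolding cond3_S21[OF S] Mw_wst1 Mw_wst2 mult.assoc bg ag
    using My P1 P2 snz by (simp add: y_def field_simps)
  moreover have "x$1*y$2 - x$2*y$1 \<noteq> 0" using dx snz unfolding y_def by (simp add: algebra_simps)
  ultimately show ?thesis by blast
qed



lemma euler: "cond3 t x y w \<Longrightarrow> qt t (tp x y w) = q x x * q y y * q w w"
proof -
  assume c: "cond3 t x y w"
  have "qt t (tp x y w) = x$1 * (t$1$1$1*y$1*w$1 + t$1$1$2*y$1*w$2 + t$1$2$1*y$2*w$1 + t$1$2$2*y$2*w$2)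
     + x$2 * (t$2$1$1*y$1*w$1 + t$2$1$2*y$1*w$2 + t$2$2$1*y$2*w$1 + t$2$2$2*y$2*w$2)"
    by (simp add: qt_eq algebra_simps)
  also have "\<dots> = q x x * q y y * q w w" using c unfolding cond3_def by (simp add: q_eq algebra_simps)
  finally show ?thesis .
qed

lemma tp_smult: "tp (a *s x) (b *s y) (c *s w) = tp ((a*b*c) *s x) y w"
  by (simp add: tens_eq)

lemma scale_unique:
  assumes "cond3 t x y w" "cond3 t (m *s x) y w" "q x x * q y y * q w w \<noteq> 0" "m \<noteq> 0"
  shows "m = 1"
proof -
  have "qt t (tp (m *s x) y w) = m * qt t (tp x y w)" by (simp add: qt_eq algebra_simps)
  hence "q (m *s x) (m *s x) * q y y * q w w = m * (q x x * q y y * q w w)"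
    using euler[OF assms(1)] euler[OF assms(2)] by simp
  hence "m * m * (q x x * q y y * q w w) = m * (q x x * q y y * q w w)"
    by (simp add: q_eq algebra_simps)
  thus ?thesis using assms(3,4) by simp
qed

lemma par_ex:
  fixes x u :: vec
  assumes "x$1 * u$2 - x$2 * u$1 = 0" "u \<noteq> 0"
  shows "\<exists>l. x = l *s u"
proof (cases "u$1 = 0")
  case True
  hence "u$2 \<noteq> 0" using assms(2) by (simp add: vec2_zero)
  thus ?thesis using assms(1) True by (intro exI[of _ "x$2 / u$2"]) (simp add: vec2_eq field_simps)
next
  case False
  thus ?thesis using assms(1) by (intro exI[of _ "x$1 / u$1"]) (simp add: vec2_eq field_simps)
qed

lemma cond3_of_crit: "crit X3 tan3 t (tp x y w) \<Longrightarrow> cond3 t x y w"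
  using crit3_iff by blast

lemma hnz: "G5 t \<noteq> 0 \<Longrightarrow> hA t \<noteq> 0 \<or> hB t \<noteq> 0 \<or> hC t \<noteq> 0"
  by (auto simp: G5_def res2_def)

lemma pair_unique:
  assumes S: "t \<in> S21" and G: "g1 t \<noteq> 0" "Dst t \<noteq> 0" "rho2 t \<noteq> 0" "G5 t \<noteq> 0"
    and c1: "cond3 t x1 y1 (wst t)" and d1: "x1$1*y1$2 - x1$2*y1$1 \<noteq> 0"
    and cr: "crit X3 tan3 t (tp x y w)" and d: "x$1*y$2 - x$2*y$1 \<noteq> 0"
  shows "tp x y w = tp x1 y1 (wst t) \<or> tp x y w = tp y1 x1 (wst t)"
proof -
  have c: "cond3 t x y w" and nz: "tp x y w \<noteq> 0" using cr crit3_iff by auto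
  have wnz: "w \<noteq> 0" using nz tp_zero by auto
  have wsnz: "wst t \<noteq> 0" using G(3) by (auto simp: wst_def vec2_zero rho2_def)
  obtain k cc where kc: "k \<noteq> 0" "cc \<noteq> 0" "w = k *s wst t" "y = cc *s Mst t x" and hx: "hq t x = 0"
    using indep_main[OF S c d G(1-3) wnz] by blast
  obtain c01 where kc1: "c01 \<noteq> 0" "y1 = c01 *s Mst t x1" and hx1: "hq t x1 = 0"
    and nz1: "q x1 x1 * q y1 y1 * q (wst t) (wst t) \<noteq> 0"
    using indep_main[OF S c1 d1 G(1-3) wsnz] by (auto simp: algebra_simps)
  have "hq t y1 = c01^2 * hq t (Mst t x1)" unfolding kc1(2) hq_def
    by (simp add: algebra_simps power2_eq_square)
  hence hy1: "hq t y1 = 0" using hq_Mst[of t x1] hx1 by simp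
  have x1nz: "x1 \<noteq> 0" and y1nz: "y1 \<noteq> 0" using d1 by (auto simp: vec2_zero)
  have R: "x$1*x1$2 - x$2*x1$1 = 0 \<or> x$1*y1$2 - x$2*y1$1 = 0"
  proof (rule ccontr)
    assume nn: "\<not> ?thesis"
    have "hA t * (x$1)^2 + hB t * x$1 * x$2 + hC t * (x$2)^2 = 0"
         "hA t * (x1$1)^2 + hB t * x1$1 * x1$2 + hC t * (x1$2)^2 = 0"
         "hA t * (y1$1)^2 + hB t * y1$1 * y1$2 + hC t * (y1$2)^2 = 0"
      using hx hx1 hy1 by (simp_all add: hq_def)
    from three_roots[OF this] nn d1 have "hA t = 0" "hB t = 0" "hC t = 0" by auto
    thus False using hnz[OF G(4)] by simp
  qed
  have swap1: "cond3 t y1 x1 (wst t)" using cond3_swap[OF S c1] .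
  show ?thesis
  proof (cases "x$1*x1$2 - x$2*x1$1 = 0")
    case True
    then obtain l where l: "x = l *s x1" using par_ex x1nz by blast
    have "y = (cc * l / c01) *s y1" unfolding kc(4) kc1(2) l Mst_smult using kc1(1) by (simp add: vec2_eq)
    hence e: "tp x y w = tp ((l * (cc * l / c01) * k) *s x1) y1 (wst t)"
      using l kc(3) tp_smult by metis
    have "l * (cc * l / c01) * k \<noteq> 0" using e nz by (auto simp: tp_zero)
    moreover have "cond3 t ((l * (cc * l / c01) * k) *s x1) y1 (wst t)" using cr e cond3_of_crit by metis
    ultimately have "l * (cc * l / c01) * k = 1" using scale_unique[OF c1] nz1 by blast
    thus ?thesis using e by simp
  next
    case False
    hence "x$1*y1$2 - x$2*y1$1 = 0" using R by simp
    then obtain l where l: "x = l *s y1" using par_ex y1nz by blast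
    have "y = (cc * l * c01 * - Dst t) *s x1" unfolding kc(4) kc1(2) l Mst_smult Mst_Mst
      by (simp add: vec2_eq algebra_simps)
    hence e: "tp x y w = tp ((l * (cc * l * c01 * - Dst t) * k) *s y1) x1 (wst t)"
      using l kc(3) tp_smult by metis
    have "l * (cc * l * c01 * - Dst t) * k \<noteq> 0" using e nz by (auto simp: tp_zero)
    moreover have "cond3 t ((l * (cc * l * c01 * - Dst t) * k) *s y1) x1 (wst t)" using cr e cond3_of_crit by metis
    moreover have "q y1 y1 * q x1 x1 * q (wst t) (wst t) \<noteq> 0" using nz1 by (simp add: algebra_simps)
    ultimately have "l * (cc * l * c01 * - Dst t) * k = 1" using scale_unique[OF swap1] by blast
    thus ?thesis using e by simp
  qed
qed



lemma tan21_sub: "tan21 z \<subseteq> tan3 z"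
  unfolding tan21_def tan3_def by blast

lemma tansym3_sub: "tansym3 z \<subseteq> tan3 z"
  unfolding tansym3_def tan3_def by blast

lemma X21_sub: "X21 \<subseteq> X3" unfolding X21_def X3_def by blast
lemma Xsym3_sub: "Xsym3 \<subseteq> X21" unfolding X21_def Xsym3_def by blast

lemma crit21_iff:
  assumes S: "t \<in> S21"
  shows "crit X21 tan21 t z \<longleftrightarrow> crit X3 tan3 t z \<and> z \<in> X21"
proof
  assume "crit X3 tan3 t z \<and> z \<in> X21"
  thus "crit X21 tan21 t z" using tan21_sub unfolding crit_def by blast
next
  assume h: "crit X21 tan21 t z"
  then obtain x w where z: "z = tp x x w" by (auto simp: crit_def X21_def)
  have nz: "z \<noteq> 0" using h by (simp add: crit_def)
  have T: "qt (t - tp x x w) (tp a x w + tp x a w + tp x x c) = 0" for a c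
    using h unfolding crit_def z tan21_def by blast
  have "cond3 t x x w"
    using T[of "mk2 1 0" 0] T[of "mk2 0 1" 0] T[of 0 "mk2 1 0"] T[of 0 "mk2 0 1"]
    unfolding qt_tan_expand cond3_S21[OF S] by (simp add: S21D[OF S] algebra_simps) (intro conjI; algebra)
  hence "crit X3 tan3 t z" using crit3_iff nz z by simp
  thus "crit X3 tan3 t z \<and> z \<in> X21" using h by (simp add: crit_def)
qed

lemma S3_S21: "S3 \<subseteq> S21" unfolding S3_def S21_def by blast

lemma S3D: "t \<in> S3 \<Longrightarrow> t$i$j$k = t$j$i$k \<and> t$i$j$k = t$i$k$j"
  by (simp add: S3_def)

lemma critsym_iff:
  assumes S: "t \<in> S3"
  shows "crit Xsym3 tansym3 t z \<longleftrightarrow> crit X3 tan3 t z \<and> z \<in> Xsym3"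
proof
  assume "crit X3 tan3 t z \<and> z \<in> Xsym3"
  thus "crit Xsym3 tansym3 t z" using tansym3_sub unfolding crit_def by blast
next
  assume h: "crit Xsym3 tansym3 t z"
  then obtain x where z: "z = tp x x x" by (auto simp: crit_def Xsym3_def)
  have nz: "z \<noteq> 0" using h by (simp add: crit_def)
  have T: "qt (t - tp x x x) (tp a x x + tp x a x + tp x x a) = 0" for a
    using h unfolding crit_def z tansym3_def by blast
  have s: "t$1$1$2 = t$1$2$1" "t$2$1$1 = t$1$2$1" "t$1$2$2 = t$2$2$1" "t$2$1$2 = t$2$2$1"
    using S3D[OF S] by metis+
  have "cond3 t x x x"
    using T[of "mk2 1 0"] T[of "mk2 0 1"]
    unfolding qt_tan_expand cond3_def s by (simp add: algebra_simps) (intro conjI; algebra)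
  hence "crit X3 tan3 t z" using crit3_iff nz z by simp
  thus "crit X3 tan3 t z \<and> z \<in> Xsym3" using h by (simp add: crit_def)
qed


lemma wst_nz: "rho2 t \<noteq> 0 \<Longrightarrow> wst t \<noteq> 0"
  by (auto simp: wst_def vec2_zero rho2_def)

lemma crit3_S21_set:
  assumes S: "t \<in> S21" and G: "g1 t \<noteq> 0" "Dst t \<noteq> 0" "rho2 t \<noteq> 0" "G5 t \<noteq> 0"
    and c1: "cond3 t x1 y1 (wst t)" and d1: "x1$1*y1$2 - x1$2*y1$1 \<noteq> 0"
  shows "{z. crit X3 tan3 t z} = {z. crit X21 tan21 t z} \<union> {tp x1 y1 (wst t), tp y1 x1 (wst t)}"
proof (intro equalityI subsetI)
  fix z assume "z \<in> {z. crit X3 tan3 t z}"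
  hence cz: "crit X3 tan3 t z" by simp
  then obtain x y w where z: "z = tp x y w" by (auto simp: crit_def X3_def)
  have nz: "tp x y w \<noteq> 0" using cz z by (simp add: crit_def)
  show "z \<in> {z. crit X21 tan21 t z} \<union> {tp x1 y1 (wst t), tp y1 x1 (wst t)}"
  proof (cases "x$1*y$2 - x$2*y$1 = 0")
    case True
    have "x \<noteq> 0" using nz tp_zero by auto
    then obtain l where "y = l *s x" using par_ex[of y x] True by (auto simp: algebra_simps)
    hence "z = tp x x (l *s w)" unfolding z by (simp add: tens_eq)
    hence "z \<in> X21" unfolding X21_def by blast
    thus ?thesis using cz crit21_iff[OF S] by blast
  next
    case False
    thus ?thesis using pair_unique[OF S G c1 d1] cz z by blast
  qed
next
  fix z assume "z \<in> {z. crit X21 tan21 t z} \<union> {tp x1 y1 (wst t), tp y1 x1 (wst t)}"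
  moreover have "tp x1 y1 (wst t) \<noteq> 0" "tp y1 x1 (wst t) \<noteq> 0"
    using d1 wst_nz[OF G(3)] by (auto simp: tp_zero vec2_zero)
  ultimately show "z \<in> {z. crit X3 tan3 t z}"
    using crit21_iff[OF S] crit3_iff c1 cond3_swap[OF S c1] by auto
qed



definition F0 :: "tens \<Rightarrow> complex" where "F0 t = t$1$1$1*t$1$2$1 + t$1$1$2*t$1$2$2"
definition F1 :: "tens \<Rightarrow> complex" where "F1 t = t$1$1$1*t$2$2$1 - (t$1$1$1)^2 + t$1$1$2*t$2$2$2 - (t$1$1$2)^2 + 2*(t$1$2$1)^2 + 2*(t$1$2$2)^2"
definition F2 :: "tens \<Rightarrow> complex" where "F2 t = -3*t$1$1$1*t$1$2$1 - 3*t$1$1$2*t$1$2$2 + 3*t$1$2$1*t$2$2$1 + 3*t$1$2$2*t$2$2$2"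
definition F3 :: "tens \<Rightarrow> complex" where "F3 t = - t$1$1$1*t$2$2$1 - t$1$1$2*t$2$2$2 - 2*(t$1$2$1)^2 - 2*(t$1$2$2)^2 + (t$2$2$1)^2 + (t$2$2$2)^2"
definition F4 :: "tens \<Rightarrow> complex" where "F4 t = - t$1$2$1*t$2$2$1 - t$1$2$2*t$2$2$2"

definition fq :: "tens \<Rightarrow> vec \<Rightarrow> complex" where
  "fq t z = F0 t * (z$1)^4 + F1 t * (z$1)^3 * z$2 + F2 t * (z$1)^2 * (z$2)^2 + F3 t * z$1 * (z$2)^3 + F4 t * (z$2)^4"

definition Wv :: "tens \<Rightarrow> vec \<Rightarrow> vec" where
  "Wv t z = mk2 (t$1$1$1*(z$1)^2 + 2*t$1$2$1*z$1*z$2 + t$2$2$1*(z$2)^2)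
                (t$1$1$2*(z$1)^2 + 2*t$1$2$2*z$1*z$2 + t$2$2$2*(z$2)^2)"

definition G7 :: "tens \<Rightarrow> complex" where "G7 t = (t$1$1$1 - t$2$2$1)^2 + 4*(t$1$2$1)^2"
definition G10 :: "tens \<Rightarrow> complex" where "G10 t = (F0 t - F2 t + F4 t)^2 + (F1 t - F3 t)^2"
definition G11 :: "tens \<Rightarrow> complex" where "G11 t = res2 (t$1$1$1) (2*t$1$2$1) (t$2$2$1) (t$1$1$2) (2*t$1$2$2) (t$2$2$2)"

definition disc4 :: "complex \<Rightarrow> complex \<Rightarrow> complex \<Rightarrow> complex \<Rightarrow> complex \<Rightarrow> complex" where
"disc4 a b c d e = 256*a^3*e^3 - 192*a^2*b*d*e^2 - 128*a^2*c^2*e^2 + 144*a^2*c*d^2*e - 27*a^2*d^4 + 144*a*b^2*c*e^2 - 6*a*b^2*d^2*e - 80*a*b*c^2*d*e + 18*a*b*c*d^3 + 16*a*c^4*e - 4*a*c^3*d^2 - 27*b^4*e^2 + 18*b^3*c*d*e - 4*b^3*d^3 - 4*b^2*c^3*e + b^2*c^2*d^2"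

lemma disc4_double:
  assumes "e + d*r + c*r^2 + b*r^3 + a*r^4 = 0" "d + 2*c*r + 3*b*r^2 + 4*a*r^3 = 0"
  shows "disc4 a b c d e = 0"
proof -
  have d: "d = -(2*c*r + 3*b*r^2 + 4*a*r^3)" using assms(2) by (simp add: algebra_simps eq_neg_iff_add_eq_0)
  have e: "e = -(d*r + c*r^2 + b*r^3 + a*r^4)" using assms(1) by (simp add: algebra_simps eq_neg_iff_add_eq_0)
  show ?thesis unfolding disc4_def e d by algebra
qed

definition G9 :: "tens \<Rightarrow> complex" where "G9 t = disc4 (F4 t) (F3 t) (F2 t) (F1 t) (F0 t)"

lemma fq_eq: "fq t z = z$1 * ((Wv t z$1 * t$1$2$1 + Wv t z$2 * t$1$2$2) * z$1 + (Wv t z$1 * t$2$2$1 + Wv t z$2 * t$2$2$2) * z$2)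
   - z$2 * ((Wv t z$1 * t$1$1$1 + Wv t z$2 * t$1$1$2) * z$1 + (Wv t z$1 * t$1$2$1 + Wv t z$2 * t$1$2$2) * z$2)"
  unfolding fq_def Wv_def F0_def F1_def F2_def F3_def F4_def by (simp only: mk2_nth) algebra

lemma crit21_fq:
  assumes S: "t \<in> S21" and c: "cond3 t x x w"
  shows "fq t x = 0" "Wv t x = (q x x)^2 *s w"
proof -
  note E = c[unfolded cond3_S21[OF S]]
  show W: "Wv t x = (q x x)^2 *s w" using E unfolding vec2_eq Wv_def
    by (simp add: algebra_simps power2_eq_square)
  show "fq t x = 0" unfolding fq_eq W using E by (simp add: q_eq) algebra
qed

lemma crit21_alpha:
  assumes S: "t \<in> S21" and c: "cond3 t x x w" and nz: "x \<noteq> 0" and G: "G7 t \<noteq> 0"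
  shows "q x x \<noteq> 0"
proof
  assume a: "q x x = 0"
  have W: "Wv t x = 0" using crit21_fq(2)[OF S c] a by simp
  have h1: "(x$1)^2 + (x$2)^2 = 0" using a by (simp add: q_eq power2_eq_square)
  have h2: "t$1$1$1*(x$1)^2 + 2*t$1$2$1*x$1*x$2 + t$2$2$1*(x$2)^2 = 0"
    using W by (simp add: Wv_def vec2_zero)
  have "G7 t * (x$1)^4 = 0" "G7 t * (x$2)^4 = 0" using h1 h2 unfolding G7_def by algebra+
  thus False using G nz by (simp add: vec2_zero)
qed



lemma fq_cond3:
  assumes S: "t \<in> S21" and a: "q x x \<noteq> 0" and f: "fq t x = 0"
  shows "cond3 t x x ((1 / (q x x)^2) *s Wv t x)"
proof -
  define c where "c = 1 / (q x x)^2"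
  have c1: "c * (q x x)^2 = 1" using a by (simp add: c_def)
  define W1 where "W1 = Wv t x $ 1"
  define W2 where "W2 = Wv t x $ 2"
  have f': "x$1 * ((W1 * t$1$2$1 + W2 * t$1$2$2) * x$1 + (W1 * t$2$2$1 + W2 * t$2$2$2) * x$2)
   - x$2 * ((W1 * t$1$1$1 + W2 * t$1$1$2) * x$1 + (W1 * t$1$2$1 + W2 * t$1$2$2) * x$2) = 0"
    using f unfolding fq_eq W1_def W2_def .
  have qw: "q (c *s Wv t x) (c *s Wv t x) = c^2 * (W1^2 + W2^2)"
    by (simp add: q_eq W1_def W2_def algebra_simps power2_eq_square)
  have sumW: "x$1 * ((W1 * t$1$1$1 + W2 * t$1$1$2) * x$1 + (W1 * t$1$2$1 + W2 * t$1$2$2) * x$2)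
     + x$2 * ((W1 * t$1$2$1 + W2 * t$1$2$2) * x$1 + (W1 * t$2$2$1 + W2 * t$2$2$2) * x$2) = W1^2 + W2^2"
    unfolding W1_def W2_def Wv_def by (simp only: mk2_nth) algebra
  have qx: "q x x = (x$1)^2 + (x$2)^2" by (simp add: q_eq power2_eq_square)
  have e1: "(c * W1 * t$1$1$1 + c * W2 * t$1$1$2) * x$1 + (c * W1 * t$1$2$1 + c * W2 * t$1$2$2) * x$2
      = x$1 * q x x * (c^2 * (W1^2 + W2^2))"
    using f' sumW c1 unfolding qx by algebra
  have e2: "(c * W1 * t$1$2$1 + c * W2 * t$1$2$2) * x$1 + (c * W1 * t$2$2$1 + c * W2 * t$2$2$2) * x$2
      = x$2 * q x x * (c^2 * (W1^2 + W2^2))"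
    using f' sumW c1 unfolding qx by algebra
  have e3: "t$1$1$1*x$1*x$1 + t$1$2$1*(x$1*x$2 + x$2*x$1) + t$2$2$1*x$2*x$2 = c * W1 * q x x * q x x"
    using c1 unfolding W1_def Wv_def by (simp only: mk2_nth) algebra
  have e4: "t$1$1$2*x$1*x$1 + t$1$2$2*(x$1*x$2 + x$2*x$1) + t$2$2$2*x$2*x$2 = c * W2 * q x x * q x x"
    using c1 unfolding W2_def Wv_def by (simp only: mk2_nth) algebra
  show ?thesis unfolding cond3_S21[OF S] c_def[symmetric] qw
    using e1 e2 e3 e4 by (simp add: W1_def W2_def algebra_simps)
qed



definition Fp :: "tens \<Rightarrow> complex poly" where "Fp t = [:F0 t, F1 t, F2 t, F3 t, F4 t:]"

lemma poly_Fp: "poly (Fp t) s = fq t (mk2 1 s)"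
  by (simp add: Fp_def fq_def algebra_simps power2_eq_square power3_eq_cube power4_eq_xxxx)

definition Zs :: "tens \<Rightarrow> complex \<Rightarrow> tens" where
  "Zs t s = tp (mk2 1 s) (mk2 1 s) ((1 / (q (mk2 1 s) (mk2 1 s))^2) *s Wv t (mk2 1 s))"

lemma card_roots4:
  fixes a0 a1 a2 a3 a4 :: complex
  assumes "a4 \<noteq> 0" "disc4 a4 a3 a2 a1 a0 \<noteq> 0"
  shows "card {s. poly [:a0, a1, a2, a3, a4:] s = 0} = 4"
proof -
  define p where "p = [:a0, a1, a2, a3, a4:]"
  have deg: "degree p = 4" using assms(1) by (simp add: p_def)
  have pnz: "p \<noteq> 0" using assms(1) by (auto simp: p_def)
  have "rsquarefree p"
    unfolding rsquarefree_roots
  proof (intro allI notI)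
    fix r assume "poly p r = 0 \<and> poly (pderiv p) r = 0"
    hence "a0 + a1*r + a2*r^2 + a3*r^3 + a4*r^4 = 0" "a1 + 2*a2*r + 3*a3*r^2 + 4*a4*r^3 = 0"
      by (simp_all add: p_def pderiv_pCons algebra_simps power2_eq_square power3_eq_cube power4_eq_xxxx)
    hence "disc4 a4 a3 a2 a1 a0 = 0" by (intro disc4_double)
    thus False using assms(2) by simp
  qed
  hence eq: "smult (lead_coeff p) (\<Prod>z|poly p z = 0. [:-z, 1:]) = p"
    by (rule complex_poly_decompose_rsquarefree)
  have fin: "finite {z. poly p z = 0}" using pnz by (rule poly_roots_finite)
  have lc: "lead_coeff p \<noteq> 0" using pnz by simp
  have "degree p = degree (smult (lead_coeff p) (\<Prod>z|poly p z = 0. [:-z, 1:]))"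
    using eq by simp
  also have "\<dots> = degree (\<Prod>z|poly p z = 0. [:-z, 1:])"
    using lc by (simp only: degree_smult_eq) simp
  also have "\<dots> = (\<Sum>z|poly p z = 0. degree [:-z, 1:])"
    by (rule degree_prod_sum_eq) auto
  also have "\<dots> = card {z. poly p z = 0}" by simp
  finally show ?thesis using deg by (simp add: p_def)
qed

lemma Wv_nz:
  assumes "G11 t \<noteq> 0" "z \<noteq> 0"
  shows "Wv t z \<noteq> 0"
proof
  assume "Wv t z = 0"
  hence "t$1$1$1*(z$1)^2 + (2*t$1$2$1)*z$1*z$2 + t$2$2$1*(z$2)^2 = 0"
        "t$1$1$2*(z$1)^2 + (2*t$1$2$2)*z$1*z$2 + t$2$2$2*(z$2)^2 = 0"
    by (simp_all add: Wv_def vec2_zero algebra_simps)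
  hence "G11 t = 0" unfolding G11_def using res2_root_vec assms(2) by blast
  thus False using assms(1) by simp
qed

lemma root_alpha:
  assumes "G10 t \<noteq> 0" "poly (Fp t) s = 0"
  shows "q (mk2 1 s) (mk2 1 s) \<noteq> 0"
proof
  assume "q (mk2 1 s) (mk2 1 s) = 0"
  hence h: "1 + s^2 = 0" by (simp add: q_eq power2_eq_square)
  have "F0 t + F1 t * s + F2 t * s^2 + F3 t * s^3 + F4 t * s^4 = 0"
    using assms(2) by (simp add: Fp_def algebra_simps power2_eq_square power3_eq_cube power4_eq_xxxx)
  hence "G10 t = 0" using h unfolding G10_def by algebra
  thus False using assms(1) by simp
qed

lemma Zs_crit:
  assumes S: "t \<in> S21" and G: "G10 t \<noteq> 0" "G11 t \<noteq> 0" and r: "poly (Fp t) s = 0"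
  shows "crit X21 tan21 t (Zs t s)" "(1 / (q (mk2 1 s) (mk2 1 s))^2) *s Wv t (mk2 1 s) \<noteq> 0"
proof -
  have a: "q (mk2 1 s) (mk2 1 s) \<noteq> 0" using root_alpha G r by blast
  have f: "fq t (mk2 1 s) = 0" using r poly_Fp by simp
  have c: "cond3 t (mk2 1 s) (mk2 1 s) ((1 / (q (mk2 1 s) (mk2 1 s))^2) *s Wv t (mk2 1 s))"
    using fq_cond3[OF S a f] .
  have u: "mk2 1 s \<noteq> 0" by (simp add: vec2_zero)
  show wnz: "(1 / (q (mk2 1 s) (mk2 1 s))^2) *s Wv t (mk2 1 s) \<noteq> 0"
    using Wv_nz[OF G(2) u] a by (auto simp: vec2_zero)
  have "crit X3 tan3 t (Zs t s)" unfolding Zs_def crit3_iff using c u wnz by (simp add: tp_zero)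
  moreover have "Zs t s \<in> X21" unfolding Zs_def X21_def by blast
  ultimately show "crit X21 tan21 t (Zs t s)" using crit21_iff[OF S] by blast
qed

lemma fq_hom: "fq t (c *s z) = c^4 * fq t z"
  by (simp add: fq_def algebra_simps power2_eq_square power3_eq_cube power4_eq_xxxx)

lemma Wv_hom: "Wv t (c *s z) = c^2 *s Wv t z"
  by (simp add: Wv_def vec2_eq algebra_simps power2_eq_square)

lemma crit21_set:
  assumes S: "t \<in> S21" and G: "G7 t \<noteq> 0" "F4 t \<noteq> 0" "G10 t \<noteq> 0" "G11 t \<noteq> 0"
  shows "{z. crit X21 tan21 t z} = Zs t ` {s. poly (Fp t) s = 0}"
proof (intro equalityI subsetI)
  fix z assume "z \<in> {z. crit X21 tan21 t z}"
  hence cz: "crit X21 tan21 t z" by simp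
  then obtain x w where z: "z = tp x x w" by (auto simp: crit_def X21_def)
  have c3: "crit X3 tan3 t (tp x x w)" using cz z crit21_iff[OF S] by simp
  hence c: "cond3 t x x w" and nz: "tp x x w \<noteq> 0" using crit3_iff by auto
  have xnz: "x \<noteq> 0" using nz tp_zero by auto
  have a: "q x x \<noteq> 0" using crit21_alpha[OF S c xnz G(1)] .
  have f: "fq t x = 0" and W: "Wv t x = (q x x)^2 *s w" using crit21_fq[OF S c] by auto
  have x1: "x$1 \<noteq> 0"
  proof
    assume h: "x$1 = 0"
    hence "x$2 \<noteq> 0" using xnz by (simp add: vec2_zero)
    moreover have "F4 t * (x$2)^4 = 0" using f h by (simp add: fq_def)
    ultimately show False using G(2) by simp
  qed
  define s where "s = x$2 / x$1"
  have xu: "x = x$1 *s mk2 1 s" using x1 by (simp add: vec2_eq s_def)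
  have "fq t x = (x$1)^4 * poly (Fp t) s" by (subst xu) (simp add: fq_hom poly_Fp)
  hence root: "poly (Fp t) s = 0" using f x1 by simp
  have qx: "q x x = (x$1)^2 * q (mk2 1 s) (mk2 1 s)" by (subst (1 2) xu) (simp add: q_eq algebra_simps power2_eq_square)
  have au: "q (mk2 1 s) (mk2 1 s) \<noteq> 0" using a qx by auto
  have "w = (1 / (q x x)^2) *s Wv t x" using W a by (simp add: vec2_eq field_simps)
  also have "\<dots> = (1 / ((x$1)^2 * (q (mk2 1 s) (mk2 1 s))^2)) *s Wv t (mk2 1 s)"
    unfolding qx by (subst xu) (simp add: Wv_hom vec2_eq field_simps x1 au power2_eq_square)
  finally have wz: "w = (1 / (x$1)^2) *s ((1 / (q (mk2 1 s) (mk2 1 s))^2) *s Wv t (mk2 1 s))"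
    by (simp add: vec2_eq)
  have "z = Zs t s" unfolding z Zs_def
    by (subst (1 2) xu, subst wz, subst tp_smult) (simp add: x1 power2_eq_square)
  thus "z \<in> Zs t ` {s. poly (Fp t) s = 0}" using root by blast
next
  fix z assume "z \<in> Zs t ` {s. poly (Fp t) s = 0}"
  thus "z \<in> {z. crit X21 tan21 t z}" using Zs_crit[OF S G(3,4)] by auto
qed

lemma Zs_inj:
  assumes S: "t \<in> S21" and G: "G10 t \<noteq> 0" "G11 t \<noteq> 0"
  shows "inj_on (Zs t) {s. poly (Fp t) s = 0}"
proof (rule inj_onI)
  fix s s' assume r: "s \<in> {s. poly (Fp t) s = 0}" "s' \<in> {s. poly (Fp t) s = 0}" and e: "Zs t s = Zs t s'"
  define w where "w = (1 / (q (mk2 1 s) (mk2 1 s))^2) *s Wv t (mk2 1 s)"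
  define w' where "w' = (1 / (q (mk2 1 s') (mk2 1 s'))^2) *s Wv t (mk2 1 s')"
  have wnz: "w \<noteq> 0" using Zs_crit(2)[OF S G] r by (simp add: w_def)
  have E: "tp (mk2 1 s) (mk2 1 s) w = tp (mk2 1 s') (mk2 1 s') w'" using e by (simp add: Zs_def w_def w'_def)
  have "w$k = w'$k" "s * w$k = s' * w'$k" for k
    using arg_cong[OF E, of "\<lambda>z. z$1$1$k"] arg_cong[OF E, of "\<lambda>z. z$2$1$k"] by simp_all
  thus "s = s'" using wnz by (metis mult_cancel_right vec2_zero)
qed

lemma card_crit21:
  assumes S: "t \<in> S21" and G: "G7 t \<noteq> 0" "F4 t \<noteq> 0" "G9 t \<noteq> 0" "G10 t \<noteq> 0" "G11 t \<noteq> 0"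
  shows "card {z. crit X21 tan21 t z} = 4"
  unfolding crit21_set[OF S G(1,2,4,5)] card_image[OF Zs_inj[OF S G(4,5)]]
  unfolding Fp_def using card_roots4 G(2,3) unfolding G9_def by blast



lemma slot1: "cond3 t x y w \<Longrightarrow> qt t (tp v y w) = q x v * q y y * q w w"
proof -
  assume c: "cond3 t x y w"
  have "qt t (tp v y w) = v$1 * (t$1$1$1*y$1*w$1 + t$1$1$2*y$1*w$2 + t$1$2$1*y$2*w$1 + t$1$2$2*y$2*w$2)
     + v$2 * (t$2$1$1*y$1*w$1 + t$2$1$2*y$1*w$2 + t$2$2$1*y$2*w$1 + t$2$2$2*y$2*w$2)"
    by (simp add: qt_eq algebra_simps)
  also have "\<dots> = q x v * q y y * q w w" using c unfolding cond3_def by (simp add: q_eq algebra_simps)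
  finally show ?thesis .
qed

lemma slot2: "cond3 t x y w \<Longrightarrow> qt t (tp x v w) = q y v * q x x * q w w"
proof -
  assume c: "cond3 t x y w"
  have "qt t (tp x v w) = v$1 * (t$1$1$1*x$1*w$1 + t$1$1$2*x$1*w$2 + t$2$1$1*x$2*w$1 + t$2$1$2*x$2*w$2)
     + v$2 * (t$1$2$1*x$1*w$1 + t$1$2$2*x$1*w$2 + t$2$2$1*x$2*w$1 + t$2$2$2*x$2*w$2)"
    by (simp add: qt_eq algebra_simps)
  also have "\<dots> = q y v * q x x * q w w" using c unfolding cond3_def by (simp add: q_eq algebra_simps)
  finally show ?thesis .
qed

lemma slot3: "cond3 t x y w \<Longrightarrow> qt t (tp x y v) = q w v * q x x * q y y"
proof -
  assume c: "cond3 t x y w"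
  have "qt t (tp x y v) = v$1 * (t$1$1$1*x$1*y$1 + t$1$2$1*x$1*y$2 + t$2$1$1*x$2*y$1 + t$2$2$1*x$2*y$2)
     + v$2 * (t$1$1$2*x$1*y$1 + t$1$2$2*x$1*y$2 + t$2$1$2*x$2*y$1 + t$2$2$2*x$2*y$2)"
    by (simp add: qt_eq algebra_simps)
  also have "\<dots> = q w v * q x x * q y y" using c unfolding cond3_def by (simp add: q_eq algebra_simps)
  finally show ?thesis .
qed

lemma q_smult: "q (a *s x) y = a * q x y" "q x (a *s y) = a * q x y"
  by (simp_all add: q_eq algebra_simps)

lemma tp_lin1: "tp (a *s x) y w = tp x (a *s y) w" "tp x y (a *s w) = tp x (a *s y) w"
  by (simp_all add: tens_eq algebra_simps)

lemma sv_lemma: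
  assumes c: "cond3 t x y w" and ra: "ra^2 = q x x" and rb: "rb^2 = q y y" and rc: "rc^2 = q w w"
    and nz: "ra \<noteq> 0" "rb \<noteq> 0" "rc \<noteq> 0"
  shows "singular_value t (tp x y w) (ra*rb*rc)"
  unfolding singular_value_def
proof (intro exI conjI allI)
  show "q ((1/ra) *s x) ((1/ra) *s x) = 1" using nz by (simp add: q_smult ra[symmetric] power2_eq_square)
  show "q ((1/rb) *s y) ((1/rb) *s y) = 1" using nz by (simp add: q_smult rb[symmetric] power2_eq_square)
  show "q ((1/rc) *s w) ((1/rc) *s w) = 1" using nz by (simp add: q_smult rc[symmetric] power2_eq_square)
  show "tp x y w = tp ((ra*rb*rc) *s ((1/ra) *s x)) ((1/rb) *s y) ((1/rc) *s w)"
    using nz by (simp add: tens_eq)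
  fix v
  show "qt t (tp v ((1/rb) *s y) ((1/rc) *s w)) = ra*rb*rc * q ((1/ra) *s x) v"
  proof -
    have "qt t (tp v ((1/rb) *s y) ((1/rc) *s w)) = (1/rb) * (1/rc) * qt t (tp v y w)"
      by (simp add: qt_eq algebra_simps)
    thus ?thesis using slot1[OF c, of v] nz by (simp add: rb[symmetric] rc[symmetric] q_smult power2_eq_square field_simps)
  qed
  show "qt t (tp ((1/ra) *s x) v ((1/rc) *s w)) = ra*rb*rc * q ((1/rb) *s y) v"
  proof -
    have "qt t (tp ((1/ra) *s x) v ((1/rc) *s w)) = (1/ra) * (1/rc) * qt t (tp x v w)"
      by (simp add: qt_eq algebra_simps)
    thus ?thesis using slot2[OF c, of v] nz by (simp add: ra[symmetric] rc[symmetric] q_smult power2_eq_square field_simps)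
  qed
  show "qt t (tp ((1/ra) *s x) ((1/rb) *s y) v) = ra*rb*rc * q ((1/rc) *s w) v"
  proof -
    have "qt t (tp ((1/ra) *s x) ((1/rb) *s y) v) = (1/ra) * (1/rb) * qt t (tp x y v)"
      by (simp add: qt_eq algebra_simps)
    thus ?thesis using slot3[OF c, of v] nz by (simp add: ra[symmetric] rb[symmetric] q_smult power2_eq_square field_simps)
  qed
qed

lemma sq_real:
  fixes s :: complex
  assumes "s^2 = of_real r" "r \<ge> 0"
  shows "s \<in> \<real>"
proof -
  have i: "Im (s^2) = 0" and re: "Re (s^2) = r" using assms(1) by simp_all
  have "2 * Re s * Im s = 0" using i by (simp add: Im_power2)
  moreover have "(Re s)^2 - (Im s)^2 \<ge> 0" using re assms(2) by (simp add: Re_power2)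
  ultimately have "Im s = 0"
  proof (cases "Re s = 0")
    case True
    hence "(Im s)^2 \<le> 0" using \<open>(Re s)^2 - (Im s)^2 \<ge> 0\<close> by simp
    thus ?thesis by simp
  qed simp
  thus ?thesis by (simp add: complex_is_Real_iff)
qed

lemma real_ratio:
  assumes "real_tensor t" "rho2 t \<noteq> 0"
  shows "\<exists>r\<ge>0. - Dst t / rho2 t = of_real r"
proof -
  have R: "t$i$j$k \<in> \<real>" for i j k using assms(1) by (simp add: real_tensor_def complex_is_Real_iff)
  have "m11 t \<in> \<real>" "m12 t \<in> \<real>" "trA t \<in> \<real>" "trB t \<in> \<real>"
    by (simp_all add: m11_def m12_def trA_def trB_def R Reals_add Reals_diff Reals_mult)
  then obtain a b c d where abcd: "m11 t = of_real a" "m12 t = of_real b" "trA t = of_real c" "trB t = of_real d"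
    by (metis Reals_cases)
  have "- Dst t / rho2 t = of_real ((a^2 + b^2) / (c^2 + d^2))"
    unfolding Dst_alt rho2_def abcd by simp
  moreover have "(a^2 + b^2) / (c^2 + d^2) \<ge> 0" by simp
  ultimately show ?thesis by blast
qed



definition P21 :: "tens \<Rightarrow> complex" where
  "P21 t = g1 t * Dst t * rho2 t * G5 t * G6 t * G7 t * F4 t * G9 t * G10 t * G11 t"

lemma pf_diff: "poly_fun p \<Longrightarrow> poly_fun r \<Longrightarrow> poly_fun (\<lambda>t. p t - r t)"
proof -
  assume "poly_fun p" "poly_fun r"
  hence "poly_fun (\<lambda>t. p t + (\<lambda>t. -1) t * r t)" by (intro pf_add pf_mult pf_const)
  thus ?thesis by simp
qed

lemma pf_uminus: "poly_fun p \<Longrightarrow> poly_fun (\<lambda>t. - p t)"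
proof -
  assume "poly_fun p"
  hence "poly_fun (\<lambda>t. (\<lambda>t. -1) t * p t)" by (intro pf_mult pf_const)
  thus ?thesis by simp
qed

lemma pf_pow: "poly_fun p \<Longrightarrow> poly_fun (\<lambda>t. p t ^ n)"
proof (induction n)
  case 0 thus ?case using pf_const[of 1] by simp
next
  case (Suc n)
  hence "poly_fun (\<lambda>t. p t * p t ^ n)" by (intro pf_mult) auto
  thus ?case by simp
qed

lemmas pf_basic = pf_add pf_mult pf_diff pf_uminus pf_pow pf_coord pf_const

lemma pf_trA: "poly_fun trA" unfolding trA_def[abs_def] by (intro pf_basic)
lemma pf_trB: "poly_fun trB" unfolding trB_def[abs_def] by (intro pf_basic)
lemma pf_m11: "poly_fun m11" unfolding m11_def[abs_def] by (intro pf_basic pf_trA pf_trB)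
lemma pf_m12: "poly_fun m12" unfolding m12_def[abs_def] by (intro pf_basic pf_trA pf_trB)
lemma pf_m22: "poly_fun m22" unfolding m22_def[abs_def] by (intro pf_basic pf_trA pf_trB)
lemma pf_n11: "poly_fun n11" unfolding n11_def[abs_def] by (intro pf_basic pf_trA pf_trB)
lemma pf_n12: "poly_fun n12" unfolding n12_def[abs_def] by (intro pf_basic pf_trA pf_trB)
lemma pf_n22: "poly_fun n22" unfolding n22_def[abs_def] by (intro pf_basic pf_trA pf_trB)
lemmas pf_m = pf_m11 pf_m12 pf_m22 pf_n11 pf_n12 pf_n22 pf_trA pf_trB
lemma pf_hA: "poly_fun hA" unfolding hA_def[abs_def] by (intro pf_basic pf_m)
lemma pf_hB: "poly_fun hB" unfolding hB_def[abs_def] by (intro pf_basic pf_m)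
lemma pf_hC: "poly_fun hC" unfolding hC_def[abs_def] by (intro pf_basic pf_m)
lemma pf_F0: "poly_fun F0" unfolding F0_def[abs_def] by (intro pf_basic)
lemma pf_F1: "poly_fun F1" unfolding F1_def[abs_def] by (intro pf_basic)
lemma pf_F2: "poly_fun F2" unfolding F2_def[abs_def] by (intro pf_basic)
lemma pf_F3: "poly_fun F3" unfolding F3_def[abs_def] by (intro pf_basic)
lemma pf_F4: "poly_fun F4" unfolding F4_def[abs_def] by (intro pf_basic)
lemmas pf_all = pf_m pf_hA pf_hB pf_hC pf_F0 pf_F1 pf_F2 pf_F3 pf_F4

lemma pf_P21: "poly_fun P21"
  unfolding P21_def[abs_def] g1_def Dst_def rho2_def G5_def G6_def G7_def G9_def G10_def G11_def
    res2_def disc4_def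
  by (intro pf_basic pf_all)

definition t0 :: tens where "t0 = (\<chi> i j k. if i = 1 \<and> j = 1 \<and> k = 1 then -2 else -1)"

lemma t0_S3: "t0 \<in> S3"
  unfolding S3_def t0_def by auto

lemma t0_nth: "t0$1$1$1 = -2" "t0$1$1$2 = -1" "t0$1$2$1 = -1" "t0$1$2$2 = -1"
  "t0$2$1$1 = -1" "t0$2$1$2 = -1" "t0$2$2$1 = -1" "t0$2$2$2 = -1"
  by (simp_all add: t0_def)

lemma P21_t0: "P21 t0 \<noteq> 0"
  unfolding P21_def g1_def Dst_def rho2_def G5_def G6_def G7_def G9_def G10_def G11_def
    res2_def disc4_def hA_def hB_def hC_def n11_def n12_def n22_def m11_def m12_def m22_def
    trA_def trB_def F0_def F1_def F2_def F3_def F4_def t0_nth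
  by simp



lemma P21_factors:
  assumes "P21 t \<noteq> 0"
  shows "g1 t \<noteq> 0" "Dst t \<noteq> 0" "rho2 t \<noteq> 0" "G5 t \<noteq> 0" "G6 t \<noteq> 0" "G7 t \<noteq> 0"
    "F4 t \<noteq> 0" "G9 t \<noteq> 0" "G10 t \<noteq> 0" "G11 t \<noteq> 0"
  using assms by (auto simp: P21_def)

lemma tp_swap_ne:
  assumes "x$1*y$2 - x$2*y$1 \<noteq> 0" "w \<noteq> 0"
  shows "tp x y w \<noteq> tp y x w"
proof
  assume e: "tp x y w = tp y x w"
  obtain k where k: "w$k \<noteq> 0" using assms(2) by (auto simp: vec_eq_iff)
  have "x$1 * y$2 * w$k = y$1 * x$2 * w$k" using arg_cong[OF e, of "\<lambda>z. z$1$2$k"] by simp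
  hence "(x$1*y$2 - x$2*y$1) * w$k = 0" by (simp add: algebra_simps)
  thus False using assms(1) k by simp
qed

lemma notX21:
  assumes "x$1*y$2 - x$2*y$1 \<noteq> 0" "w \<noteq> 0"
  shows "tp x y w \<notin> X21"
proof
  assume "tp x y w \<in> X21"
  then obtain u v where e: "tp x y w = tp u u v" by (auto simp: X21_def)
  obtain k where k: "w$k \<noteq> 0" using assms(2) by (auto simp: vec_eq_iff)
  have "x$1 * y$2 * w$k = x$2 * y$1 * w$k"
    using arg_cong[OF e, of "\<lambda>z. z$1$2$k"] arg_cong[OF e, of "\<lambda>z. z$2$1$k"] by simp
  hence "(x$1*y$2 - x$2*y$1) * w$k = 0" by (simp add: algebra_simps)
  thus False using assms(1) k by simp
qed

lemma notXsym:
  assumes "x$1*y$2 - x$2*y$1 \<noteq> 0"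
  shows "tp x x y \<notin> Xsym3"
proof
  assume "tp x x y \<in> Xsym3"
  then obtain u where e: "tp x x y = tp u u u" by (auto simp: Xsym3_def)
  have "x$1 * x$1 * y$2 = x$2 * x$1 * y$1" "x$1 * x$2 * y$2 = x$2 * x$2 * y$1"
    using arg_cong[OF e, of "\<lambda>z. z$1$1$2"] arg_cong[OF e, of "\<lambda>z. z$2$1$1"]
      arg_cong[OF e, of "\<lambda>z. z$1$2$2"] arg_cong[OF e, of "\<lambda>z. z$2$2$1"] by (simp_all add: algebra_simps)
  hence "x$1 * (x$1*y$2 - x$2*y$1) = 0" "x$2 * (x$1*y$2 - x$2*y$1) = 0" by (simp_all add: algebra_simps)
  hence "x$1 = 0" "x$2 = 0" using assms by simp_all
  thus False using assms by simp
qed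

lemma part1:
  assumes S: "t \<in> S21" and P: "P21 t \<noteq> 0"
  shows "card {z. crit X21 tan21 t z} = 4 \<and>
           (\<exists>x y w.
              {z. crit X3 tan3 t z} = {z. crit X21 tan21 t z} \<union> {tp x y w, tp y x w} \<and>
              tp x y w \<noteq> tp y x w \<and> tp x y w \<notin> X21 \<and> tp y x w \<notin> X21 \<and>
              (real_tensor t \<longrightarrow>
                 (\<exists>\<sigma>\<in>\<real>. singular_value t (tp x y w) \<sigma> \<and> singular_value t (tp y x w) \<sigma>)))"
proof -
  note G = P21_factors[OF P]
  have card: "card {z. crit X21 tan21 t z} = 4" using card_crit21[OF S G(6,7,8,9,10)] .
  obtain x y where d: "x$1*y$2 - x$2*y$1 \<noteq> 0" and c: "cond3 t x y (wst t)"
    using pair_exists[OF S G(4,5,2,3)] by blast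
  have wnz: "wst t \<noteq> 0" using wst_nz G(3) by blast
  have set: "{z. crit X3 tan3 t z} = {z. crit X21 tan21 t z} \<union> {tp x y (wst t), tp y x (wst t)}"
    using crit3_S21_set[OF S G(1-4) c d] .
  have d': "y$1*x$2 - y$2*x$1 \<noteq> 0" using d by (simp add: algebra_simps)
  have c': "cond3 t y x (wst t)" using cond3_swap[OF S c] .
  have IM: "q x x \<noteq> 0 \<and> q y y \<noteq> 0 \<and> q (wst t) (wst t) \<noteq> 0 \<and>
     q x x * q y y * q (wst t) (wst t) * rho2 t = - Dst t"
    using indep_main[OF S c d G(1-3) wnz] by blast
  have real: "\<exists>\<sigma>\<in>\<real>. singular_value t (tp x y (wst t)) \<sigma> \<and> singular_value t (tp y x (wst t)) \<sigma>"
    if R: "real_tensor t"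
  proof -
    define \<sigma> where "\<sigma> = csqrt (q x x) * csqrt (q y y) * csqrt (q (wst t) (wst t))"
    have nz: "csqrt (q x x) \<noteq> 0" "csqrt (q y y) \<noteq> 0" "csqrt (q (wst t) (wst t)) \<noteq> 0" using IM by auto
    have sv1: "singular_value t (tp x y (wst t)) \<sigma>" unfolding \<sigma>_def
      by (rule sv_lemma[OF c]) (use IM in auto)
    have sv2: "singular_value t (tp y x (wst t)) \<sigma>"
    proof -
      have "singular_value t (tp y x (wst t)) (csqrt (q y y) * csqrt (q x x) * csqrt (q (wst t) (wst t)))"
        by (rule sv_lemma[OF c']) (use IM in auto)
      thus ?thesis unfolding \<sigma>_def by (simp add: mult_ac)
    qed
    obtain r where r: "r \<ge> 0" "- Dst t / rho2 t = of_real r" using real_ratio[OF R G(3)] by blast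
    have "\<sigma>^2 = q x x * q y y * q (wst t) (wst t)" unfolding \<sigma>_def by (simp add: power_mult_distrib)
    also have "\<dots> = - Dst t / rho2 t" using IM G(3) by (simp add: field_simps)
    finally have "\<sigma> \<in> \<real>" using sq_real r by simp
    thus ?thesis using sv1 sv2 by blast
  qed
  show ?thesis
    using card set tp_swap_ne[OF d wnz] notX21[OF d wnz] notX21[OF d' wnz] real by blast
qed



lemma cond3_perm23: "t \<in> S3 \<Longrightarrow> cond3 t x y w \<Longrightarrow> cond3 t x w y"
proof -
  assume S: "t \<in> S3" and c: "cond3 t x y w"
  have s: "t$1$1$2 = t$1$2$1" "t$2$1$1 = t$1$2$1" "t$1$2$2 = t$2$2$1" "t$2$1$2 = t$2$2$1"
    using S3D[OF S] by metis+
  show ?thesis using c unfolding cond3_def s by (simp add: algebra_simps)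
qed

lemma crit3_perm23: "t \<in> S3 \<Longrightarrow> crit X3 tan3 t (tp x y w) \<Longrightarrow> crit X3 tan3 t (tp x w y)"
  using cond3_perm23 crit3_iff tp_zero by metis

lemma crit3_swap12: "t \<in> S21 \<Longrightarrow> crit X3 tan3 t (tp x y w) \<Longrightarrow> crit X3 tan3 t (tp y x w)"
  using cond3_swap crit3_iff tp_zero by metis

lemma crit21_X21: "crit X21 tan21 t z \<Longrightarrow> z \<in> X21" by (simp add: crit_def)


lemma part2_pair:
  assumes S: "t \<in> S3" and S21: "t \<in> S21"
    and set: "{z. crit X3 tan3 t z} = {z. crit X21 tan21 t z} \<union> {tp x0 y0 w0, tp y0 x0 w0}"
    and c0: "cond3 t x0 y0 w0" and d0: "x0$1*y0$2 - x0$2*y0$1 \<noteq> 0" and w0: "w0 \<noteq> 0"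
  shows "\<exists>x y. x$1*y$2 - x$2*y$1 \<noteq> 0 \<and> {tp x0 y0 w0, tp y0 x0 w0} = {tp x y x, tp y x x}"
proof -
  have x0: "x0 \<noteq> 0" and y0: "y0 \<noteq> 0" using d0 by (auto simp: vec2_zero)
  have nz0: "tp x0 y0 w0 \<noteq> 0" using x0 y0 w0 by (simp add: tp_zero)
  have cp1: "crit X3 tan3 t (tp x0 y0 w0)" using crit3_iff c0 nz0 by simp
  have cq: "crit X3 tan3 t (tp x0 w0 y0)" using crit3_perm23[OF S cp1] .
  show ?thesis
  proof (cases "w0$1*x0$2 - w0$2*x0$1 = 0")
    case True
    then obtain l where l: "w0 = l *s x0" using par_ex x0 by blast
    have ln: "l \<noteq> 0" using l w0 by auto
    have "tp x0 y0 w0 = tp x0 (l *s y0) x0" "tp y0 x0 w0 = tp (l *s y0) x0 x0"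
      unfolding l by (simp_all add: tens_eq algebra_simps)
    moreover have "x0$1*(l *s y0)$2 - x0$2*(l *s y0)$1 \<noteq> 0" using d0 ln by (simp add: algebra_simps)
    ultimately show ?thesis by (intro exI[of _ x0] exI[of _ "l *s y0"]) auto
  next
    case False
    hence dd: "x0$1*w0$2 - x0$2*w0$1 \<noteq> 0" by (simp add: algebra_simps)
    have "tp x0 w0 y0 \<notin> X21" using notX21[OF dd y0] .
    hence "tp x0 w0 y0 \<notin> {z. crit X21 tan21 t z}" using crit21_X21 by blast
    hence "tp x0 w0 y0 = tp x0 y0 w0 \<or> tp x0 w0 y0 = tp y0 x0 w0" using cq set by blast
    thus ?thesis
    proof
      assume e: "tp x0 w0 y0 = tp x0 y0 w0"
      obtain l m n where lmn: "x0 = l *s x0" "w0 = m *s y0" "y0 = n *s w0" using tp_scale[OF e nz0] by blast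
      have mn: "m \<noteq> 0" using lmn(2) w0 by auto
      have "tp x0 y0 w0 = tp (m *s x0) y0 y0" "tp y0 x0 w0 = tp y0 (m *s x0) y0"
        unfolding lmn(2) by (simp_all add: tens_eq algebra_simps)
      moreover have "y0$1*(m *s x0)$2 - y0$2*(m *s x0)$1 \<noteq> 0" using d0 mn by (simp add: algebra_simps)
      ultimately show ?thesis by (intro exI[of _ y0] exI[of _ "m *s x0"]) auto
    next
      assume e: "tp x0 w0 y0 = tp y0 x0 w0"
      have nz': "tp y0 x0 w0 \<noteq> 0" using x0 y0 w0 by (simp add: tp_zero)
      obtain l m n where lmn: "x0 = l *s y0" using tp_scale[OF e nz'] by blast
      have "x0$1*y0$2 - x0$2*y0$1 = 0" unfolding lmn by (simp add: algebra_simps)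
      thus ?thesis using d0 by simp
    qed
  qed
qed


lemma part2:
  assumes S: "t \<in> S3" and P: "P21 t \<noteq> 0"
  shows "card {z. crit Xsym3 tansym3 t z} = 3 \<and>
           (\<exists>x y.
              {z. crit X3 tan3 t z} = {z. crit Xsym3 tansym3 t z} \<union> {tp x x y, tp x y x, tp y x x} \<and>
              tp x x y \<noteq> tp x y x \<and> tp x x y \<noteq> tp y x x \<and> tp x y x \<noteq> tp y x x \<and>
              tp x x y \<notin> Xsym3 \<and> tp x y x \<notin> Xsym3 \<and> tp y x x \<notin> Xsym3 \<and>
              (real_tensor t \<longrightarrow>
                 (\<exists>\<sigma>\<in>\<real>. singular_value t (tp x x y) \<sigma> \<and> singular_value t (tp x y x) \<sigma>
                         \<and> singular_value t (tp y x x) \<sigma>)))"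
proof -
  have S21: "t \<in> S21" using S S3_S21 by blast
  note G = P21_factors[OF P]
  have card21: "card {z. crit X21 tan21 t z} = 4" using card_crit21[OF S21 G(6,7,8,9,10)] .
  obtain x0 y0 where d0: "x0$1*y0$2 - x0$2*y0$1 \<noteq> 0" and c0: "cond3 t x0 y0 (wst t)"
    using pair_exists[OF S21 G(4,5,2,3)] by blast
  have wnz: "wst t \<noteq> 0" using wst_nz G(3) by blast
  have set0: "{z. crit X3 tan3 t z} = {z. crit X21 tan21 t z} \<union> {tp x0 y0 (wst t), tp y0 x0 (wst t)}"
    using crit3_S21_set[OF S21 G(1-4) c0 d0] .
  obtain x y where d: "x$1*y$2 - x$2*y$1 \<noteq> 0"
    and pp: "{tp x0 y0 (wst t), tp y0 x0 (wst t)} = {tp x y x, tp y x x}"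
    using part2_pair[OF S S21 set0 c0 d0 wnz] by blast
  have set: "{z. crit X3 tan3 t z} = {z. crit X21 tan21 t z} \<union> {tp x y x, tp y x x}"
    using set0 pp by simp
  have xnz: "x \<noteq> 0" and ynz: "y \<noteq> 0" using d by (auto simp: vec2_zero)
  have d': "y$1*x$2 - y$2*x$1 \<noteq> 0" using d by (simp add: algebra_simps)
  have cxyx: "crit X3 tan3 t (tp x y x)" and cyxx: "crit X3 tan3 t (tp y x x)" using set by auto
  have c_xyx: "cond3 t x y x" and c_yxx: "cond3 t y x x" using cxyx cyxx crit3_iff by auto
  have cxxy: "crit X3 tan3 t (tp x x y)" using crit3_perm23[OF S cxyx] .
  have c_xxy: "cond3 t x x y" using cxxy crit3_iff by auto
  have IM: "q x x \<noteq> 0 \<and> q y y \<noteq> 0 \<and> q x x * q y y * q x x * rho2 t = - Dst t"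
    using indep_main[OF S21 c_xyx d G(1-3) xnz] by blast
  define e where "e = tp x x y"
  have eX21: "e \<in> X21" unfolding e_def X21_def by blast
  have e21: "crit X21 tan21 t e" using crit21_iff[OF S21] cxxy eX21 e_def by simp
  have eXs: "e \<notin> Xsym3" unfolding e_def using notXsym[OF d] .
  have nX1: "tp x y x \<notin> X21" using notX21[OF d xnz] .
  have nX2: "tp y x x \<notin> X21" using notX21[OF d' xnz] .
  define Cs where "Cs = {z. crit Xsym3 tansym3 t z}"
  have Cs_eq: "Cs = {z. crit X21 tan21 t z \<and> z \<in> Xsym3}"
    unfolding Cs_def using critsym_iff[OF S] crit21_iff[OF S21] Xsym3_sub by blast
  have other: "z = e" if z21: "crit X21 tan21 t z" and zs: "z \<notin> Xsym3" for z
  proof -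
    obtain u v where z: "z = tp u u v" using crit21_X21[OF z21] by (auto simp: X21_def)
    have cz: "crit X3 tan3 t (tp u u v)" using z21 z crit21_iff[OF S21] by simp
    have nzz: "tp u u v \<noteq> 0" using cz crit3_iff by blast
    have unz: "u \<noteq> 0" and vnz: "v \<noteq> 0" using nzz tp_zero by auto
    show ?thesis
    proof (cases "v$1 * u$2 - v$2 * u$1 = 0")
      case True
      then obtain l where l: "v = l *s u" using par_ex unz by blast
      obtain r where r: "l = r^3" using exists_complex_root[of 3 l] by auto
      have "tp u u v = tp (r *s u) (r *s u) (r *s u)"
        unfolding l r by (simp add: tens_eq algebra_simps power3_eq_cube)
      hence "z \<in> Xsym3" unfolding z Xsym3_def by blast
      thus ?thesis using zs by simp
    next
      case False
      hence duv: "u$1 * v$2 - u$2 * v$1 \<noteq> 0" by (simp add: algebra_simps)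
      have cuvu: "crit X3 tan3 t (tp u v u)" using crit3_perm23[OF S cz] .
      have "tp u v u \<notin> X21" using notX21[OF duv unz] .
      hence "tp u v u \<notin> {z. crit X21 tan21 t z}" using crit21_X21 by blast
      hence "tp u v u = tp x y x \<or> tp u v u = tp y x x" using cuvu set by blast
      thus ?thesis
      proof
        assume eq: "tp u v u = tp x y x"
        have nzx: "tp x y x \<noteq> 0" using xnz ynz by (simp add: tp_zero)
        obtain l m n where lmn: "u = l *s x" "v = m *s y" using tp_scale[OF eq nzx] by blast
        have zz: "z = tp ((l*l*m) *s x) x y" unfolding z lmn by (simp add: tens_eq algebra_simps)
        have "l*l*m \<noteq> 0" using zz nzz z by (auto simp: tp_zero)
        moreover have "cond3 t ((l*l*m) *s x) x y" using cz z zz crit3_iff by metis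
        moreover have "q x x * q x x * q y y \<noteq> 0" using IM by simp
        ultimately have "l*l*m = 1" using scale_unique[OF c_xxy] by blast
        thus ?thesis using zz e_def by simp
      next
        assume eq: "tp u v u = tp y x x"
        have nzx: "tp y x x \<noteq> 0" using xnz ynz by (simp add: tp_zero)
        obtain l m n where lmn: "u = l *s y" "v = m *s x" "u = n *s x" using tp_scale[OF eq nzx] by blast
        have ln: "l \<noteq> 0" using lmn(1) unz by auto
        have "l * (x$1*y$2 - x$2*y$1) = x$1 * u$2 - x$2 * u$1" unfolding lmn(1) by (simp add: algebra_simps)
        also have "\<dots> = 0" unfolding lmn(3) by (simp add: algebra_simps)
        finally show ?thesis using ln d by simp
      qed
    qed
  qed
  have C21: "{z. crit X21 tan21 t z} = insert e Cs"
    unfolding Cs_eq using other e21 eXs by blast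
  have eCs: "e \<notin> Cs" unfolding Cs_eq using eXs by blast
  have fin: "finite Cs" using card21 C21 by (metis card.infinite finite_insert zero_neq_numeral)
  have cardCs: "card Cs = 3" using card21 unfolding C21 using card_insert_disjoint[OF fin eCs] by simp
  have set3: "{z. crit X3 tan3 t z} = Cs \<union> {tp x x y, tp x y x, tp y x x}"
    using set C21 e_def by auto
  have ne1: "tp x x y \<noteq> tp x y x" using eX21 nX1 e_def by auto
  have ne2: "tp x x y \<noteq> tp y x x" using eX21 nX2 e_def by auto
  have ne3: "tp x y x \<noteq> tp y x x" using tp_swap_ne[OF d xnz] .
  have ns: "tp x x y \<notin> Xsym3" "tp x y x \<notin> Xsym3" "tp y x x \<notin> Xsym3"
    using eXs e_def nX1 nX2 Xsym3_sub by auto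
  have real: "\<exists>\<sigma>\<in>\<real>. singular_value t (tp x x y) \<sigma> \<and> singular_value t (tp x y x) \<sigma>
                         \<and> singular_value t (tp y x x) \<sigma>" if R: "real_tensor t"
  proof -
    define \<sigma> where "\<sigma> = csqrt (q x x) * csqrt (q x x) * csqrt (q y y)"
    have sv1: "singular_value t (tp x x y) \<sigma>" unfolding \<sigma>_def
      by (rule sv_lemma[OF c_xxy]) (use IM in auto)
    have sv2: "singular_value t (tp x y x) \<sigma>"
    proof -
      have "singular_value t (tp x y x) (csqrt (q x x) * csqrt (q y y) * csqrt (q x x))"
        by (rule sv_lemma[OF c_xyx]) (use IM in auto)
      thus ?thesis unfolding \<sigma>_def by (simp add: mult_ac)
    qed
    have sv3: "singular_value t (tp y x x) \<sigma>"
    proof -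
      have "singular_value t (tp y x x) (csqrt (q y y) * csqrt (q x x) * csqrt (q x x))"
        by (rule sv_lemma[OF c_yxx]) (use IM in auto)
      thus ?thesis unfolding \<sigma>_def by (simp add: mult_ac)
    qed
    obtain r where r: "r \<ge> 0" "- Dst t / rho2 t = of_real r" using real_ratio[OF R G(3)] by blast
    have "\<sigma>^2 = q x x * q y y * q x x" unfolding \<sigma>_def by (simp add: power_mult_distrib mult_ac)
    also have "\<dots> = - Dst t / rho2 t" using IM G(3) by (simp add: field_simps)
    finally have "\<sigma> \<in> \<real>" using sq_real r by simp
    thus ?thesis using sv1 sv2 sv3 by blast
  qed
  show ?thesis
    unfolding Cs_def[symmetric] using cardCs set3 ne1 ne2 ne3 ns real by blast
qed


theorem proposition6p1:
  shows "general S21 (\<lambda>t.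
           card {z. crit X21 tan21 t z} = 4 \<and>
           (\<exists>x y w.
              {z. crit X3 tan3 t z} = {z. crit X21 tan21 t z} \<union> {tp x y w, tp y x w} \<and>
              tp x y w \<noteq> tp y x w \<and> tp x y w \<notin> X21 \<and> tp y x w \<notin> X21 \<and>
              (real_tensor t \<longrightarrow>
                 (\<exists>\<sigma>\<in>\<real>. singular_value t (tp x y w) \<sigma> \<and> singular_value t (tp y x w) \<sigma>))))
       \<and> general S3 (\<lambda>t.
           card {z. crit Xsym3 tansym3 t z} = 3 \<and>
           (\<exists>x y.
              {z. crit X3 tan3 t z} = {z. crit Xsym3 tansym3 t z} \<union> {tp x x y, tp x y x, tp y x x} \<and>
              tp x x y \<noteq> tp x y x \<and> tp x x y \<noteq> tp y x x \<and> tp x y x \<noteq> tp y x x \<and>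
              tp x x y \<notin> Xsym3 \<and> tp x y x \<notin> Xsym3 \<and> tp y x x \<notin> Xsym3 \<and>
              (real_tensor t \<longrightarrow>
                 (\<exists>\<sigma>\<in>\<real>. singular_value t (tp x x y) \<sigma> \<and> singular_value t (tp x y x) \<sigma>
                         \<and> singular_value t (tp y x x) \<sigma>))))"
proof -
  have t0: "t0 \<in> S21" using t0_S3 S3_S21 by blast
  show ?thesis unfolding general_def
    apply (intro conjI exI[of _ P21])
         apply (rule pf_P21)
        apply (rule bexI[of _ t0], rule P21_t0, rule t0)
       apply (intro ballI impI, erule part1, assumption)
      apply (rule pf_P21)
     apply (rule bexI[of _ t0], rule P21_t0, rule t0_S3)
    apply (intro ballI impI, erule part2, assumption)
    done
qed


end
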